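(* Let $\{X_1,X_2,\dots\}$ be a random dense countable subset of $(0,1)$ satisfying the independence condition, and such that for every Borel set $B\subset(0,1)$ of Lebesgue measure $0$ we have $B\cap\{X_1,X_2,\dots\}=\emptyset$ a.s. Then there exists a measurable function $r:(0,1)\to[0,\infty]$ such that for every Borel set $B\subset(0,1)$: - (a) if $\int_B r(x)\,dx=\infty$, then the set $B\cap\{X_1,X_2,\dots\}$ is infinite a.s.; - (b) if $\int_B r(x)\,dx<\infty$, then the set $B\cap\{X_1,X_2,\dots\}$ is finite a.s., and the number of its elements has the Poisson distribution with mean $\int_B r(x)\,dx$.
   Context: A random countable subset of $(0,1)$ is given by random variables $X_1,X_2,\dots:\Omega\to(0,1)$ on a probability space, the set being $\omega\mapsto\{X_1(\omega),X_2(\omega),\dots\}$. It is dense if this set is dense in $(0,1)$ for a.e. $\omega$. Two random countable sets $\{X_k\},\{Y_k\}$ are identically distributed if some probability measure $P$ on $(0,1)^\infty\times(0,1)^\infty$ has marginals the laws of $(X_k)_k$ and $(Y_k)_k$ and satisfies $\{x_1,x_2,\dots\}=\{y_1,y_2,\dots\}$ for $P$-a.a. $(x,y)$. Independence condition. For every $n\ge2$ and every $0=a_0<a_1<\dots<a_n=1$ there must exist random variables $Y_{i,j}$ ($i\le n$, $j\ge1$) on some probability space such that: - $\{Y_{i,j}\}$ is distributed like $\{X_k\}$; - $Y_{i,j}\in[a_{i-1},a_i)$ a.s.; - the sequences $(Y_{1,j})_j,\dots,(Y_{n,j})_j$ are independent. *)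

theory Defs
  imports "HOL-Probability.Probability"
begin

text \<open>A random countable set is represented by the law L of its indexing family y on this space;
  the set itself is y ` I.\<close>

abbreviation seqsp :: "'i set \<Rightarrow> ('i \<Rightarrow> real) measure" where
  "seqsp I \<equiv> PiM I (\<lambda>_. borel)"

definition rcs_ident_distr ::
  "'i set \<Rightarrow> ('i \<Rightarrow> real) measure \<Rightarrow> 'j set \<Rightarrow> ('j \<Rightarrow> real) measure \<Rightarrow> bool" where
  "rcs_ident_distr I L J L' \<longleftrightarrow>
     (\<exists>P. prob_space P \<and> sets P = sets (seqsp I \<Otimes>\<^sub>M seqsp J) \<and>
          distr P (seqsp I) fst = L \<and> distr P (seqsp J) snd = L' \<and>
          (AE p in P. fst p ` I = snd p ` J))"

definition seq_law :: "'a measure \<Rightarrow> (nat \<Rightarrow> 'a \<Rightarrow> real) \<Rightarrow> (nat \<Rightarrow> real) measure" where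
  "seq_law M X = distr M (seqsp UNIV) (\<lambda>\<omega> k. X k \<omega>)"

text \<open>The random variables Y_{i,j} (i < n, j in nat; the paper's index
  i+1) on some probability space are represented by their joint law Q on the sequence space
  indexed by {..<n} \<times> UNIV.\<close>

definition independence_condition :: "'a measure \<Rightarrow> (nat \<Rightarrow> 'a \<Rightarrow> real) \<Rightarrow> bool" where
  "independence_condition M X \<longleftrightarrow>
     (\<forall>n::nat. \<forall>a::nat \<Rightarrow> real.
        n \<ge> 2 \<and> a 0 = 0 \<and> a n = 1 \<and> (\<forall>i<n. a i < a (Suc i)) \<longrightarrow>
        (\<exists>Q. prob_space Q \<and> sets Q = sets (seqsp ({..<n} \<times> (UNIV::nat set))) \<and>
             rcs_ident_distr ({..<n} \<times> UNIV) Q UNIV (seq_law M X) \<and>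
             (AE y in Q. \<forall>i<n. \<forall>j. y (i, j) \<in> {a i..<a (Suc i)}) \<and>
             prob_space.indep_vars Q (\<lambda>_. seqsp (UNIV::nat set)) (\<lambda>i y. (\<lambda>j. y (i, j))) {..<n}))"

end

theory Submission
  imports Defs
begin


locale rcs =
  fixes M :: "'a measure" and X :: "nat \<Rightarrow> 'a \<Rightarrow> real"
  assumes ps: "prob_space M"
    and Xm[measurable]: "\<And>k. X k \<in> borel_measurable M"
    and X01: "\<And>k \<omega>. \<omega> \<in> space M \<Longrightarrow> X k \<omega> \<in> {0<..<1}"
    and indc: "independence_condition M X"
    and nullc: "\<And>B. B \<in> sets borel \<Longrightarrow> B \<subseteq> {0<..<1} \<Longrightarrow> emeasure lborel B = 0 \<Longrightarrow>
           AE \<omega> in M. B \<inter> range (\<lambda>k. X k \<omega>) = {}"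
begin

sublocale prob_space M by (rule ps)

definition hit :: "real set \<Rightarrow> 'a set" where
  "hit C = {\<omega> \<in> space M. \<exists>k. X k \<omega> \<in> C}"

lemma hit_sets[measurable]: assumes [measurable]: "C \<in> sets borel" shows "hit C \<in> sets M"
  unfolding hit_def by measurable

definition gi :: "real set \<Rightarrow> (nat \<Rightarrow> real) \<Rightarrow> real" where
  "gi C x = indicator {x. \<exists>k. x k \<in> C} x"

lemma gi_meas[measurable]: assumes [measurable]: "C \<in> sets borel" shows "gi C \<in> borel_measurable (seqsp UNIV)"
  unfolding gi_def by measurable

lemma Xs_meas[measurable]: "(\<lambda>\<omega> k. X k \<omega>) \<in> measurable M (seqsp UNIV)"
  by (rule measurable_PiM_single') auto

lemma transfer:
  fixes I :: "'i set" and Q :: "('i \<Rightarrow> real) measure" and P and N' :: "'b measure"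
  assumes P: "prob_space P" "sets P = sets (seqsp I \<Otimes>\<^sub>M seqsp UNIV)"
      "distr P (seqsp I) fst = Q" "distr P (seqsp UNIV) snd = seq_law M X"
    and F: "F \<in> measurable (seqsp UNIV) N'" and G: "G \<in> measurable (seqsp I) N'"
    and ae: "AE p in P. F (snd p) = G (fst p)"
  shows "distr M N' (\<lambda>\<omega>. F (\<lambda>k. X k \<omega>)) = distr Q N' G"
proof -
  have snd: "snd \<in> measurable P (seqsp UNIV)" and fst: "fst \<in> measurable P (seqsp I)"
    using measurable_cong_sets[OF P(2) refl] by auto
  have "distr M N' (\<lambda>\<omega>. F (\<lambda>k. X k \<omega>)) = distr (seq_law M X) N' F"
    unfolding seq_law_def using F by (subst distr_distr) (auto simp: comp_def)
  also have "\<dots> = distr P N' (\<lambda>p. F (snd p))"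
    unfolding P(4)[symmetric] using F snd by (subst distr_distr) (auto simp: comp_def)
  also have "\<dots> = distr P N' (\<lambda>p. G (fst p))"
    using F G snd fst ae by (intro distr_cong_AE) auto
  also have "\<dots> = distr Q N' G"
    unfolding P(3)[symmetric] using G fst by (subst distr_distr) (auto simp: comp_def)
  finally show ?thesis .
qed

lemma part_mono:
  fixes a :: "nat \<Rightarrow> real"
  assumes "\<forall>i<n. a i < a (Suc i)" "i < j" "j \<le> n"
  shows "a (Suc i) \<le> a j"
  using assms(2,3)
proof (induction j)
  case 0 then show ?case by simp
next
  case (Suc j)
  show ?case
  proof (cases "i = j")
    case True then show ?thesis by simp
  next
    case False
    then have "a (Suc i) \<le> a j" using Suc by simp
    also have "a j \<le> a (Suc j)" using assms(1) Suc by (meson less_eq_Suc_le less_imp_le)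
    finally show ?thesis .
  qed
qed

lemma part_disj:
  fixes a :: "nat \<Rightarrow> real"
  assumes "\<forall>i<n. a i < a (Suc i)" "i < n" "i' < n"
    "x \<in> {a i..<a (Suc i)}" "x \<in> {a i'..<a (Suc i')}"
  shows "i = i'"
proof (rule ccontr)
  assume "i \<noteq> i'"
  then consider "i < i'" | "i' < i" by linarith
  then show False
  proof cases
    case 1 then have "a (Suc i) \<le> a i'" using part_mono[OF assms(1)] assms by auto
    then show False using assms by auto
  next
    case 2 then have "a (Suc i') \<le> a i" using part_mono[OF assms(1)] assms by auto
    then show False using assms by auto
  qed
qed

lemma indep_blocks:
  assumes n: "n \<ge> 2" "a 0 = 0" "a n = 1" "\<forall>i<n. a i < a (Suc i)"
    and Cm: "\<And>j. C j \<in> sets borel" and Cs: "\<And>j. j < n \<Longrightarrow> C j \<subseteq> {a j ..< a (Suc j)}"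
  shows "indep_vars (\<lambda>_. borel) (\<lambda>j \<omega>. indicator (hit (C j)) \<omega> :: real) {..<n}"
proof -
  note Cm[measurable]
  have "0 < n" using n(1) by simp
  then have ne0: "{..<n} \<noteq> {}" by auto
  define I where "I = {..<n} \<times> (UNIV :: nat set)"
  obtain Q where Q: "prob_space Q" "sets Q = sets (seqsp I)"
      "rcs_ident_distr I Q UNIV (seq_law M X)"
      "AE y in Q. \<forall>i<n. \<forall>j. y (i, j) \<in> {a i..<a (Suc i)}"
      "prob_space.indep_vars Q (\<lambda>_. seqsp (UNIV::nat set)) (\<lambda>i y. (\<lambda>j. y (i, j))) {..<n}"
    using indc n unfolding independence_condition_def I_def by blast
  obtain P where P: "prob_space P" "sets P = sets (seqsp I \<Otimes>\<^sub>M seqsp UNIV)"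
      "distr P (seqsp I) fst = Q" "distr P (seqsp UNIV) snd = seq_law M X"
      "AE p in P. fst p ` I = snd p ` UNIV"
    using Q(3) unfolding rcs_ident_distr_def by blast
  have fst: "fst \<in> measurable P (seqsp I)"
    using measurable_cong_sets[OF P(2) refl] by auto
  define h where "h i y = gi (C i) (\<lambda>l. y (i, l))" for i y
  have projm[measurable]: "(\<lambda>y. \<lambda>l. y (i, l)) \<in> measurable (seqsp I) (seqsp UNIV)" if "i < n" for i
    by (rule measurable_PiM_single') (use that in \<open>auto simp: I_def\<close>)
  have hm[measurable]: "h i \<in> borel_measurable (seqsp I)" if "i < n" for i
    unfolding h_def using that by measurable
  have aeQ: "AE p in P. \<forall>i<n. \<forall>j. fst p (i, j) \<in> {a i..<a (Suc i)}"
    using AE_distrD[OF fst, of "\<lambda>y. \<forall>i<n. \<forall>j. y (i, j) \<in> {a i..<a (Suc i)}"] Q(4) P(3) by metis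
  have ae: "AE p in P. \<forall>i<n. gi (C i) (snd p) = h i (fst p)"
    using aeQ P(5)
  proof eventually_elim
    case (elim p)
    show ?case
    proof (intro allI impI)
      fix i assume i: "i < n"
      have "(\<exists>k. snd p k \<in> C i) \<longleftrightarrow> (\<exists>z \<in> snd p ` UNIV. z \<in> C i)" by auto
      also have "\<dots> \<longleftrightarrow> (\<exists>z \<in> fst p ` I. z \<in> C i)" using elim by simp
      also have "\<dots> \<longleftrightarrow> (\<exists>l. fst p (i, l) \<in> C i)"
      proof
        assume "\<exists>z \<in> fst p ` I. z \<in> C i"
        then obtain i' l where il: "i' < n" "fst p (i', l) \<in> C i" by (auto simp: I_def)
        have "fst p (i', l) \<in> {a i'..<a (Suc i')}" using elim il by auto
        moreover have "fst p (i', l) \<in> {a i..<a (Suc i)}" using Cs[OF i] il by auto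
        ultimately have "i' = i" using part_disj[OF n(4) il(1) i] by blast
        then show "\<exists>l. fst p (i, l) \<in> C i" using il by auto
      qed (use i in \<open>auto simp: I_def\<close>)
      finally show "gi (C i) (snd p) = h i (fst p)"
        unfolding gi_def h_def by (simp add: indicator_def)
    qed
  qed
  interpret Q: prob_space Q by (rule Q(1))
  have Qind: "Q.indep_vars (\<lambda>_. borel) h {..<n}"
    unfolding h_def
    by (rule Q.indep_vars_compose2[OF Q(5)]) auto
  have Qd: "distr Q (\<Pi>\<^sub>M i\<in>{..<n}. borel) (\<lambda>y. \<lambda>i\<in>{..<n}. h i y) = (\<Pi>\<^sub>M i\<in>{..<n}. distr Q borel (h i))"
  proof -
    have rvh: "\<And>i. i \<in> {..<n} \<Longrightarrow> Q.random_variable borel (h i)"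
      using measurable_cong_sets[OF Q(2) refl, of borel] hm by auto
    have "0 < n" using n(1) by simp
    then have ne: "{..<n} \<noteq> {}" by auto
    show ?thesis
      using Q.indep_vars_iff_distr_eq_PiM'[where I="{..<n}" and M'="\<lambda>_. borel" and X=h, OF ne rvh] Qind
      by simp
  qed
  have eq1: "distr M borel (\<lambda>\<omega>. indicator (hit (C i)) \<omega> :: real) = distr Q borel (h i)" if i: "i < n" for i
  proof -
    have "distr M borel (\<lambda>\<omega>. indicator (hit (C i)) \<omega> :: real) = distr M borel (\<lambda>\<omega>. gi (C i) (\<lambda>k. X k \<omega>))"
      by (intro distr_cong) (auto simp: gi_def hit_def indicator_def)
    also have "\<dots> = distr Q borel (h i)"
      by (rule transfer[OF P(1-4)]) (use ae i in \<open>auto elim!: AE_mp\<close>)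
    finally show ?thesis .
  qed
  have "distr M (\<Pi>\<^sub>M i\<in>{..<n}. borel) (\<lambda>\<omega>. \<lambda>i\<in>{..<n}. indicator (hit (C i)) \<omega> :: real) =
        distr M (\<Pi>\<^sub>M i\<in>{..<n}. borel) (\<lambda>\<omega>. (\<lambda>x. \<lambda>i\<in>{..<n}. gi (C i) x) (\<lambda>k. X k \<omega>))"
    by (intro distr_cong) (auto simp: gi_def hit_def indicator_def fun_eq_iff)
  also have "\<dots> = distr Q (\<Pi>\<^sub>M i\<in>{..<n}. borel) (\<lambda>y. \<lambda>i\<in>{..<n}. h i y)"
  proof (rule transfer[OF P(1-4)])
    show "(\<lambda>x. \<lambda>i\<in>{..<n}. gi (C i) x) \<in> measurable (seqsp UNIV) (\<Pi>\<^sub>M i\<in>{..<n}. borel)"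
      by (rule measurable_restrict) simp
    show "(\<lambda>y. \<lambda>i\<in>{..<n}. h i y) \<in> measurable (seqsp I) (\<Pi>\<^sub>M i\<in>{..<n}. borel)"
      by (rule measurable_restrict) simp
  qed (use ae in \<open>auto elim!: AE_mp simp: fun_eq_iff\<close>)
  also have "\<dots> = (\<Pi>\<^sub>M i\<in>{..<n}. distr M borel (\<lambda>\<omega>. indicator (hit (C i)) \<omega> :: real))"
    unfolding Qd by (intro PiM_cong) (auto simp: eq1)
  finally show ?thesis
    using ne0 indep_vars_iff_distr_eq_PiM'[where I="{..<n}" and M'="\<lambda>_. borel" and X="\<lambda>j \<omega>. indicator (hit (C j)) \<omega> :: real"] n
    by auto
qed

end


definition cell :: "nat \<Rightarrow> nat \<Rightarrow> real set" where
  "cell k j = {real j / 2^k ..< (real j + 1) / 2^k}"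

definition idx :: "nat \<Rightarrow> real \<Rightarrow> nat" where
  "idx k x = nat \<lfloor>x * 2^k\<rfloor>"

lemma cell_borel[measurable]: "cell k j \<in> sets borel"
  unfolding cell_def by simp

lemma cell_iff: "0 \<le> x \<Longrightarrow> x \<in> cell k j \<longleftrightarrow> idx k x = j"
proof -
  assume x: "0 \<le> x"
  have p: "(0::real) < 2^k" by simp
  have "x \<in> cell k j \<longleftrightarrow> real j \<le> x * 2^k \<and> x * 2^k < real j + 1"
    unfolding cell_def using p by (auto simp: field_simps)
  also have "\<dots> \<longleftrightarrow> \<lfloor>x * 2^k\<rfloor> = int j"
    by (auto simp: floor_eq_iff)
  also have "\<dots> \<longleftrightarrow> idx k x = j"
    unfolding idx_def using x by (auto simp: nat_eq_iff)
  finally show ?thesis .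
qed

lemma idx_lt: "0 \<le> x \<Longrightarrow> x < 1 \<Longrightarrow> idx k x < 2^k"
proof -
  assume x: "0 \<le> x" "x < 1"
  have "x * 2^k < 2^k" using x by simp
  then have f: "\<lfloor>x * 2^k\<rfloor> < 2^k"
    by (simp add: floor_less_iff)
  have "0 \<le> \<lfloor>x * 2^k\<rfloor>" using x by simp
  then show ?thesis unfolding idx_def using f
    by (simp add: nat_less_iff)
qed

lemma idx_ne:
  assumes "0 \<le> x" "0 \<le> y" "1 \<le> \<bar>x - y\<bar> * 2^k"
  shows "idx k x \<noteq> idx k y"
proof
  assume "idx k x = idx k y"
  then have "\<lfloor>x * 2^k\<rfloor> = \<lfloor>y * 2^k\<rfloor>" unfolding idx_def using assms(1,2)
    by (simp add: nat_eq_iff2)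
  then have "\<bar>x * 2^k - y * 2^k\<bar> < 1"
    by (smt (verit, best) floor_eq_iff)
  moreover have "\<bar>x * 2^k - y * 2^k\<bar> = \<bar>x - y\<bar> * 2^k"
    by (simp add: abs_mult flip: left_diff_distrib)
  ultimately show False using assms(3) by simp
qed

lemma eventually_idx_inj:
  assumes "finite F" "F \<subseteq> {0..}"
  shows "eventually (\<lambda>k. inj_on (idx k) F) sequentially"
proof -
  have "eventually (\<lambda>k. \<forall>p \<in> F \<times> F. fst p \<noteq> snd p \<longrightarrow> idx k (fst p) \<noteq> idx k (snd p)) sequentially"
  proof (rule eventually_ball_finite)
    show "finite (F \<times> F)" using assms by simp
    show "\<forall>p\<in>F \<times> F. eventually (\<lambda>k. fst p \<noteq> snd p \<longrightarrow> idx k (fst p) \<noteq> idx k (snd p)) sequentially"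
    proof
      fix p assume p: "p \<in> F \<times> F"
      show "eventually (\<lambda>k. fst p \<noteq> snd p \<longrightarrow> idx k (fst p) \<noteq> idx k (snd p)) sequentially"
      proof (cases "fst p = snd p")
        case False
        then have d: "0 < \<bar>fst p - snd p\<bar>" by simp
        obtain K where K: "1 / \<bar>fst p - snd p\<bar> < 2^K"
          using real_arch_pow[of 2 "1 / \<bar>fst p - snd p\<bar>"] by auto
        show ?thesis
        proof (rule eventually_sequentiallyI[of K])
          fix k assume "K \<le> k"
          then have "(2::real)^K \<le> 2^k" by simp
          with K have "1 / \<bar>fst p - snd p\<bar> \<le> 2^k" by linarith
          then have "1 \<le> \<bar>fst p - snd p\<bar> * 2^k" using d by (simp add: field_simps)
          then show "fst p \<noteq> snd p \<longrightarrow> idx k (fst p) \<noteq> idx k (snd p)"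
            using idx_ne[of "fst p" "snd p" k] p assms(2) by (auto simp: subset_eq)
        qed
      qed simp
    qed
  qed
  then show ?thesis
    by eventually_elim (auto simp: inj_on_def)
qed

context rcs begin

definition S :: "'a \<Rightarrow> real set" where "S \<omega> = range (\<lambda>k. X k \<omega>)"

definition Zk :: "real set \<Rightarrow> nat \<Rightarrow> 'a \<Rightarrow> nat" where
  "Zk B k \<omega> = card (idx k ` (B \<inter> S \<omega>))"

definition ecnt :: "real set \<Rightarrow> 'a \<Rightarrow> ennreal" where
  "ecnt B \<omega> = emeasure (count_space UNIV) (B \<inter> S \<omega>)"

lemma S01: "\<omega> \<in> space M \<Longrightarrow> S \<omega> \<subseteq> {0<..<1}"
  using X01 unfolding S_def by auto

lemma Zk_set:
  assumes "\<omega> \<in> space M"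
  shows "idx k ` (B \<inter> S \<omega>) = {j \<in> {..<2^k}. \<omega> \<in> hit (B \<inter> cell k j)}"
proof -
  have x01: "\<And>x. x \<in> S \<omega> \<Longrightarrow> 0 \<le> x \<and> x < 1" using S01[OF assms] by auto
  show ?thesis
  proof (intro set_eqI iffI)
    fix j assume "j \<in> idx k ` (B \<inter> S \<omega>)"
    then obtain x where x: "x \<in> B" "x \<in> S \<omega>" "j = idx k x" by auto
    then obtain i where i: "x = X i \<omega>" unfolding S_def by auto
    have "j < 2^k" using x x01 idx_lt by auto
    moreover have "x \<in> cell k j" using x x01 cell_iff by auto
    ultimately show "j \<in> {j \<in> {..<2^k}. \<omega> \<in> hit (B \<inter> cell k j)}"
      using x i assms unfolding hit_def by auto
  next
    fix j assume "j \<in> {j \<in> {..<2^k}. \<omega> \<in> hit (B \<inter> cell k j)}"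
    then obtain i where i: "X i \<omega> \<in> B" "X i \<omega> \<in> cell k j" unfolding hit_def by auto
    have xs: "X i \<omega> \<in> S \<omega>" unfolding S_def by auto
    then have "idx k (X i \<omega>) = j" using i x01 cell_iff by auto
    then show "j \<in> idx k ` (B \<inter> S \<omega>)" using i xs by force
  qed
qed

lemma Zk_sum:
  assumes "\<omega> \<in> space M"
  shows "real (Zk B k \<omega>) = (\<Sum>j<2^k. indicator (hit (B \<inter> cell k j)) \<omega>)"
proof -
  have "real (Zk B k \<omega>) = real (card {j \<in> {..<2^k}. \<omega> \<in> hit (B \<inter> cell k j)})"
    unfolding Zk_def Zk_set[OF assms] ..
  also have "\<dots> = (\<Sum>j \<in> {j \<in> {..<2^k}. \<omega> \<in> hit (B \<inter> cell k j)}. 1)"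
    by (simp only: card_eq_sum of_nat_sum of_nat_1)
  also have "\<dots> = (\<Sum>j<2^k. if \<omega> \<in> hit (B \<inter> cell k j) then 1 else 0)"
    by (rule sum.inter_filter) simp
  also have "\<dots> = (\<Sum>j<2^k. indicator (hit (B \<inter> cell k j)) \<omega>)"
    by (intro sum.cong refl) (simp add: indicator_def)
  finally show ?thesis .
qed

lemma Zk_le: "finite (B \<inter> S \<omega>) \<Longrightarrow> Zk B k \<omega> \<le> card (B \<inter> S \<omega>)"
  unfolding Zk_def by (rule card_image_le)

lemma Zk_ev_fin:
  assumes "\<omega> \<in> space M" "finite (B \<inter> S \<omega>)"
  shows "eventually (\<lambda>k. Zk B k \<omega> = card (B \<inter> S \<omega>)) sequentially"
proof -
  have "B \<inter> S \<omega> \<subseteq> {0..}" using S01[OF assms(1)] by auto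
  from eventually_idx_inj[OF assms(2) this] show ?thesis
    by eventually_elim (simp add: Zk_def card_image)
qed

lemma Zk_ev_inf:
  assumes "\<omega> \<in> space M" "infinite (B \<inter> S \<omega>)"
  shows "eventually (\<lambda>k. m \<le> Zk B k \<omega>) sequentially"
proof -
  obtain F where F: "F \<subseteq> B \<inter> S \<omega>" "finite F" "card F = m"
    using infinite_arbitrarily_large[OF assms(2)] by blast
  have "F \<subseteq> {0..}" using S01[OF assms(1)] F by auto
  from eventually_idx_inj[OF F(2) this] show ?thesis
  proof eventually_elim
    case (elim k)
    have "m = card (idx k ` F)" using elim F by (simp add: card_image)
    also have "\<dots> \<le> Zk B k \<omega>" unfolding Zk_def
    proof (intro card_mono)
      show "finite (idx k ` (B \<inter> S \<omega>))" unfolding Zk_set[OF assms(1)] by simp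
    qed (use F in auto)
    finally show ?case .
  qed
qed

end


context rcs begin

lemma Zk_meas[measurable]:
  assumes [measurable]: "B \<in> sets borel"
  shows "(\<lambda>\<omega>. real (Zk B k \<omega>)) \<in> borel_measurable M"
proof -
  have "(\<lambda>\<omega>. \<Sum>j<2^k. indicator (hit (B \<inter> cell k j)) \<omega> :: real) \<in> borel_measurable M"
    by (intro borel_measurable_sum borel_measurable_indicator hit_sets) auto
  then show ?thesis
    by (rule measurable_cong[THEN iffD1, rotated]) (simp add: Zk_sum)
qed

lemma Zk_meas'[measurable]:
  assumes [measurable]: "B \<in> sets borel"
  shows "(\<lambda>\<omega>. Zk B k \<omega>) \<in> measurable M (count_space UNIV)"
proof -
  have "(\<lambda>\<omega>. nat \<lfloor>real (Zk B k \<omega>)\<rfloor>) \<in> measurable M (count_space UNIV)"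
    by measurable
  then show ?thesis by simp
qed

lemma ecnt_liminf:
  assumes "\<omega> \<in> space M"
  shows "ecnt B \<omega> = liminf (\<lambda>k. ennreal (real (Zk B k \<omega>)))"
proof (cases "finite (B \<inter> S \<omega>)")
  case True
  have "((\<lambda>k. ennreal (real (Zk B k \<omega>))) \<longlongrightarrow> ennreal (real (card (B \<inter> S \<omega>)))) sequentially"
    using Zk_ev_fin[OF assms True]
    by (rule tendsto_eventually[OF eventually_mono]) simp
  then have "liminf (\<lambda>k. ennreal (real (Zk B k \<omega>))) = ennreal (real (card (B \<inter> S \<omega>)))"
    by (intro lim_imp_Liminf) auto
  then show ?thesis unfolding ecnt_def using True
    by (simp add: emeasure_count_space_finite ennreal_of_nat_eq_real_of_nat)
next
  case False
  have "\<infinity> \<le> liminf (\<lambda>k. ennreal (real (Zk B k \<omega>)))"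
  proof (rule le_Liminf_iff[THEN iffD2], intro allI impI)
    fix y :: ennreal assume "y < \<infinity>"
    then obtain m :: nat where m: "y < of_nat m"
      using ennreal_Ex_less_of_nat[of y] \<open>y < \<infinity>\<close> by auto
    from Zk_ev_inf[OF assms False, of m]
    show "eventually (\<lambda>k. y < ennreal (real (Zk B k \<omega>))) sequentially"
    proof eventually_elim
      case (elim k)
      then have "(of_nat m :: ennreal) \<le> of_nat (Zk B k \<omega>)" by simp
      then have "ennreal (real m) \<le> ennreal (real (Zk B k \<omega>))" by (simp add: ennreal_of_nat_eq_real_of_nat)
      moreover have "y < ennreal (real m)" using m by (simp add: ennreal_of_nat_eq_real_of_nat)
      ultimately show ?case by (simp add: order_less_le_trans)
    qed
  qed
  then have L: "liminf (\<lambda>k. ennreal (real (Zk B k \<omega>))) = \<infinity>"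
    unfolding infinity_ennreal_def by (rule top_unique[THEN iffD1])
  have "ecnt B \<omega> = \<infinity>" unfolding ecnt_def using False
    by (simp add: emeasure_count_space_infinite)
  then show ?thesis unfolding L .
qed

lemma ecnt_meas[measurable]:
  assumes [measurable]: "B \<in> sets borel"
  shows "ecnt B \<in> borel_measurable M"
proof -
  have "(\<lambda>\<omega>. liminf (\<lambda>k. ennreal (real (Zk B k \<omega>)))) \<in> borel_measurable M"
    by (rule borel_measurable_liminf) simp
  then show ?thesis
    by (rule measurable_cong[THEN iffD1, rotated]) (simp add: ecnt_liminf)
qed

definition q :: "real set \<Rightarrow> nat \<Rightarrow> nat \<Rightarrow> real" where
  "q B k j = prob (hit (B \<inter> cell k j))"

definition pB :: "real set \<Rightarrow> real" where
  "pB B = prob (space M - hit B)"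

lemma q_nonneg: "0 \<le> q B k j" and q_le1: "q B k j \<le> 1"
  unfolding q_def by auto

lemma nn_Zk:
  assumes [measurable]: "B \<in> sets borel"
  shows "(\<integral>\<^sup>+\<omega>. ennreal (real (Zk B k \<omega>)) \<partial>M) = ennreal (\<Sum>j<2^k. q B k j)"
proof -
  have "(\<integral>\<^sup>+\<omega>. ennreal (real (Zk B k \<omega>)) \<partial>M) = (\<integral>\<^sup>+\<omega>. (\<Sum>j<2^k. ennreal (indicator (hit (B \<inter> cell k j)) \<omega>)) \<partial>M)"
    by (intro nn_integral_cong) (simp add: Zk_sum flip: sum_ennreal)
  also have "\<dots> = (\<Sum>j<2^k. \<integral>\<^sup>+\<omega>. ennreal (indicator (hit (B \<inter> cell k j)) \<omega>) \<partial>M)"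
    by (intro nn_integral_sum) auto
  also have "\<dots> = (\<Sum>j<2^k. ennreal (q B k j))"
    by (intro sum.cong) (auto simp: q_def emeasure_eq_measure ennreal_indicator)
  also have "\<dots> = ennreal (\<Sum>j<2^k. q B k j)"
    by (simp add: sum_ennreal q_nonneg)
  finally show ?thesis .
qed

lemma dyadic_part:
  assumes "1 \<le> k"
  shows "2 \<le> (2::nat)^k" "(\<lambda>i. real i / 2^k) 0 = 0" "(\<lambda>i. real i / 2^k) (2^k) = 1"
    "\<forall>i<2^k. (\<lambda>i. real i / 2^k) i < (\<lambda>i. real i / 2^k) (Suc i)"
proof -
  show "2 \<le> (2::nat)^k" using assms
    by (metis power_increasing power_one_right zero_less_numeral Suc_1 one_le_numeral)
qed (auto simp: divide_strict_right_mono)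

lemma indep_cells:
  assumes "1 \<le> k" and [measurable]: "B \<in> sets borel"
  shows "indep_vars (\<lambda>_. borel) (\<lambda>j \<omega>. indicator (hit (B \<inter> cell k j)) \<omega> :: real) {..<2^k}"
proof (rule indep_blocks[OF dyadic_part[OF assms(1)]])
  fix j show "B \<inter> cell k j \<in> sets borel" by measurable
  show "B \<inter> cell k j \<subseteq> {real j / 2 ^ k..<real (Suc j) / 2 ^ k}"
    unfolding cell_def by (auto simp: add.commute)
qed

lemma hit_cells:
  assumes "B \<subseteq> {0<..<1}"
  shows "hit B = (\<Union>j<2^k. hit (B \<inter> cell k j))"
proof -
  have "\<And>x. x \<in> B \<Longrightarrow> x \<in> cell k (idx k x) \<and> idx k x < 2^k"
    using assms cell_iff idx_lt by (auto simp: subset_eq)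
  then show ?thesis unfolding hit_def by blast
qed

lemma pB_prod:
  assumes "1 \<le> k" and [measurable]: "B \<in> sets borel" and B: "B \<subseteq> {0<..<1}"
  shows "pB B = (\<Prod>j<2^k. 1 - q B k j)"
proof -
  have ne: "{..<(2::nat)^k} \<noteq> {}" by (simp add: lessThan_empty_iff)
  have "pB B = prob (\<Inter>j<2^k. (\<lambda>\<omega>. indicator (hit (B \<inter> cell k j)) \<omega> :: real) -` {0} \<inter> space M)"
    unfolding pB_def hit_cells[OF B, of k] using ne
    by (intro arg_cong[where f=prob]) (auto simp: indicator_def hit_def)
  also have "\<dots> = (\<Prod>j<2^k. prob ((\<lambda>\<omega>. indicator (hit (B \<inter> cell k j)) \<omega> :: real) -` {0} \<inter> space M))"
    by (rule indep_varsD[OF indep_cells[OF assms(1,2)]]) (use ne in auto)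
  also have "\<dots> = (\<Prod>j<2^k. 1 - q B k j)"
  proof (intro prod.cong refl)
    fix j
    have "(\<lambda>\<omega>. indicator (hit (B \<inter> cell k j)) \<omega> :: real) -` {0} \<inter> space M = space M - hit (B \<inter> cell k j)"
      by (auto simp: indicator_def hit_def)
    then show "prob ((\<lambda>\<omega>. indicator (hit (B \<inter> cell k j)) \<omega> :: real) -` {0} \<inter> space M) = 1 - q B k j"
      unfolding q_def by (simp add: prob_compl)
  qed
  finally show ?thesis .
qed

lemma pgf_Zk:
  assumes "1 \<le> k" and [measurable]: "B \<in> sets borel" and B: "B \<subseteq> {0<..<1}"
  shows "(\<integral>\<omega>. s ^ Zk B k \<omega> \<partial>M) = (\<Prod>j<2^k. 1 - (1 - s) * q B k j)"
proof -
  let ?Y = "\<lambda>j \<omega>. 1 - (1 - s) * indicator (hit (B \<inter> cell k j)) \<omega> :: real"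
  have ind: "indep_vars (\<lambda>_. borel) ?Y {..<2^k}"
    using indep_vars_compose2[OF indep_cells[OF assms(1,2)], of "\<lambda>j x. 1 - (1 - s) * x" "\<lambda>_. borel"]
    by simp
  have intY: "integrable M (?Y j)" for j
  proof -
    have i1: "integrable M (\<lambda>\<omega>. (1::real))" by simp
    have i2: "integrable M (\<lambda>\<omega>. (1 - s) * indicator (hit (B \<inter> cell k j)) \<omega> :: real)"
      by (rule integrable_mult_right, rule integrable_real_indicator) (auto simp: less_top[symmetric])
    show ?thesis using Bochner_Integration.integrable_diff[OF i1 i2] by simp
  qed
  have "(\<integral>\<omega>. s ^ Zk B k \<omega> \<partial>M) = (\<integral>\<omega>. (\<Prod>j<2^k. ?Y j \<omega>) \<partial>M)"
  proof (rule Bochner_Integration.integral_cong[OF refl])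
    fix \<omega> assume w: "\<omega> \<in> space M"
    have "(\<Prod>j<2^k. ?Y j \<omega>) = (\<Prod>j<2^k. if \<omega> \<in> hit (B \<inter> cell k j) then s else 1)"
      by (intro prod.cong) (auto simp: indicator_def)
    also have "\<dots> = s ^ card {j \<in> {..<2^k}. \<omega> \<in> hit (B \<inter> cell k j)}"
      by (simp add: prod.If_cases Int_def)
    also have "\<dots> = s ^ Zk B k \<omega>"
      unfolding Zk_def Zk_set[OF w] ..
    finally show "s ^ Zk B k \<omega> = (\<Prod>j<2^k. ?Y j \<omega>)" by simp
  qed
  also have "\<dots> = (\<Prod>j<2^k. \<integral>\<omega>. ?Y j \<omega> \<partial>M)"
    by (rule indep_vars_lebesgue_integral[OF _ ind intY]) simp
  also have "\<dots> = (\<Prod>j<2^k. 1 - (1 - s) * q B k j)"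
  proof (intro prod.cong refl)
    fix j
    have ii: "integrable M (indicator (hit (B \<inter> cell k j)) :: 'a \<Rightarrow> real)"
      by (rule integrable_real_indicator) (auto simp: less_top[symmetric])
    have "(\<integral>\<omega>. ?Y j \<omega> \<partial>M) = (\<integral>\<omega>. 1 \<partial>M) - (\<integral>\<omega>. (1 - s) * indicator (hit (B \<inter> cell k j)) \<omega> \<partial>M)"
      by (rule Bochner_Integration.integral_diff) (use ii in auto)
    also have "\<dots> = 1 - (1 - s) * q B k j"
      using ii by (simp add: q_def prob_space)
    finally show "(\<integral>\<omega>. ?Y j \<omega> \<partial>M) = 1 - (1 - s) * q B k j" .
  qed
  finally show ?thesis .
qed

end


lemma prod_diff_le:
  fixes u v :: "'i \<Rightarrow> real"
  assumes "finite J" "\<And>j. j \<in> J \<Longrightarrow> \<bar>u j\<bar> \<le> 1" "\<And>j. j \<in> J \<Longrightarrow> \<bar>v j\<bar> \<le> 1"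
  shows "\<bar>(\<Prod>j\<in>J. u j) - (\<Prod>j\<in>J. v j)\<bar> \<le> (\<Sum>j\<in>J. \<bar>u j - v j\<bar>)"
  using assms
proof (induction J rule: finite_induct)
  case empty then show ?case by simp
next
  case (insert x F)
  have pu: "\<bar>\<Prod>j\<in>F. u j\<bar> \<le> 1" using insert.prems
    by (simp add: abs_prod prod_le_1)
  have pv: "\<bar>\<Prod>j\<in>F. v j\<bar> \<le> 1" using insert.prems
    by (simp add: abs_prod prod_le_1)
  have "(\<Prod>j\<in>insert x F. u j) - (\<Prod>j\<in>insert x F. v j)
        = (u x - v x) * (\<Prod>j\<in>F. u j) + v x * ((\<Prod>j\<in>F. u j) - (\<Prod>j\<in>F. v j))"
    using insert by (simp add: algebra_simps)
  also have "\<bar>\<dots>\<bar> \<le> \<bar>u x - v x\<bar> * \<bar>\<Prod>j\<in>F. u j\<bar> + \<bar>v x\<bar> * \<bar>(\<Prod>j\<in>F. u j) - (\<Prod>j\<in>F. v j)\<bar>"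
    by (simp add: abs_mult abs_triangle_ineq[THEN order_trans])
  also have "\<dots> \<le> \<bar>u x - v x\<bar> * 1 + 1 * (\<Sum>j\<in>F. \<bar>u j - v j\<bar>)"
    using insert pu by (intro add_mono mult_mono) auto
  also have "\<dots> = (\<Sum>j\<in>insert x F. \<bar>u j - v j\<bar>)"
    using insert by simp
  finally show ?case .
qed

lemma exp_minus_approx:
  fixes x :: real
  assumes "0 \<le> x"
  shows "\<bar>exp (- x) - (1 - x)\<bar> \<le> x\<^sup>2 / 2"
proof -
  have lo: "1 - x \<le> exp (- x)" using exp_ge_add_one_self[of "-x"] by simp
  have "exp (- x) \<le> 1 - x + x\<^sup>2 / 2"
  proof -
    define f where "f y = 1 - y + y\<^sup>2 / 2 - exp (- y)" for y :: real
    have d: "(f has_real_derivative (-1 + y + exp (- y))) (at y)" for y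
      unfolding f_def by (auto intro!: derivative_eq_intros simp: power2_eq_square)
    have "f 0 \<le> f x"
    proof (rule DERIV_nonneg_imp_nondecreasing[OF assms])
      fix y assume "0 \<le> y" "y \<le> x"
      show "\<exists>y'. (f has_real_derivative y') (at y) \<and> 0 \<le> y'"
        using d[of y] exp_ge_add_one_self[of "-y"] by (intro exI[of _ "-1 + y + exp (- y)"]) auto
    qed
    then show ?thesis unfolding f_def by simp
  qed
  with lo show ?thesis by simp
qed

lemma one_minus_le_exp: "1 - (y::real) \<le> exp (- y)"
  using exp_ge_add_one_self[of "-y"] by simp

lemma poisson_lim:
  fixes a :: "nat \<Rightarrow> nat \<Rightarrow> real" and N :: "nat \<Rightarrow> nat" and p :: real
  assumes a0: "\<And>k j. 0 \<le> a k j" and a1: "\<And>k j. a k j \<le> 1"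
    and prodp: "eventually (\<lambda>k. (\<Prod>j<N k. 1 - a k j) = p) sequentially"
    and p: "0 < p"
    and small: "\<And>e. 0 < e \<Longrightarrow> eventually (\<lambda>k. \<forall>j<N k. a k j \<le> e) sequentially"
  shows "(\<lambda>k. \<Sum>j<N k. a k j) \<longlonglongrightarrow> - ln p"
    and "\<And>t. 0 \<le> t \<Longrightarrow> t \<le> 1 \<Longrightarrow> (\<lambda>k. \<Prod>j<N k. 1 - t * a k j) \<longlonglongrightarrow> exp (t * ln p)"
proof -
  define L where "L = - ln p"
  define \<sigma> where "\<sigma> k = (\<Sum>j<N k. a k j)" for k
  have sig_le: "eventually (\<lambda>k. \<sigma> k \<le> L) sequentially"
    using prodp
  proof eventually_elim
    case (elim k)
    have "p \<le> (\<Prod>j<N k. exp (- a k j))"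
      unfolding elim[symmetric] using a0 a1 one_minus_le_exp
      by (intro prod_mono) auto
    also have "\<dots> = exp (- \<sigma> k)" by (simp add: \<sigma>_def exp_sum flip: sum_negf)
    finally have "ln p \<le> ln (exp (- \<sigma> k))" using p by (subst ln_le_cancel_iff) auto
    then have "ln p \<le> - \<sigma> k" by simp
    then show ?case by (simp add: L_def)
  qed
  have L0: "0 \<le> L"
  proof -
    obtain K where "\<forall>k\<ge>K. (\<Prod>j<N k. 1 - a k j) = p" using prodp unfolding eventually_sequentially by blast
    then have "(\<Prod>j<N K. 1 - a K j) = p" by simp
    moreover have "(\<Prod>j<N K. 1 - a K j) \<le> 1" by (intro prod_le_1) (use a0 a1 in auto)
    ultimately have "p \<le> 1" by simp
    then show ?thesis using p by (simp add: L_def)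
  qed
  have D: "(\<lambda>k. (\<Prod>j<N k. 1 - t * a k j) - exp (- t * \<sigma> k)) \<longlonglongrightarrow> 0"
    if t: "0 \<le> t" "t \<le> 1" for t
  proof (rule LIMSEQ_I)
    fix r :: real assume r: "0 < r"
    define e where "e = r / (L + 1)"
    have e: "0 < e" using r L0 by (simp add: e_def)
    from small[OF e] sig_le have "eventually (\<lambda>k. norm ((\<Prod>j<N k. 1 - t * a k j) - exp (- t * \<sigma> k) - 0) < r) sequentially"
    proof eventually_elim
      case (elim k)
      have "exp (- t * \<sigma> k) = (\<Prod>j<N k. exp (- (t * a k j)))"
        by (simp add: \<sigma>_def exp_sum sum_distrib_left flip: sum_negf)
      moreover have "\<bar>(\<Prod>j<N k. 1 - t * a k j) - (\<Prod>j<N k. exp (- (t * a k j)))\<bar> \<le> (\<Sum>j<N k. \<bar>(1 - t * a k j) - exp (- (t * a k j))\<bar>)"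
      proof (rule prod_diff_le)
        fix j
        have "0 \<le> t * a k j" "t * a k j \<le> 1" using t a0[of k j] a1[of k j] by (auto simp: mult_le_one)
        then show "\<bar>1 - t * a k j\<bar> \<le> 1" "\<bar>exp (- (t * a k j))\<bar> \<le> 1" by auto
      qed simp
      ultimately have "\<bar>(\<Prod>j<N k. 1 - t * a k j) - exp (- t * \<sigma> k)\<bar> \<le> (\<Sum>j<N k. \<bar>(1 - t * a k j) - exp (- (t * a k j))\<bar>)"
        by simp
      also have "\<dots> \<le> (\<Sum>j<N k. (t * a k j)\<^sup>2 / 2)"
        using exp_minus_approx t a0 by (intro sum_mono) (simp add: abs_minus_commute)
      also have "\<dots> \<le> (\<Sum>j<N k. e * a k j)"
      proof (intro sum_mono)
        fix j assume j: "j \<in> {..<N k}"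
        have ta: "t * a k j \<le> a k j" using t a0[of k j] by (simp add: mult_left_le_one_le)
        have "(t * a k j)\<^sup>2 \<le> (a k j)\<^sup>2" by (rule power_mono[OF ta]) (use t a0 in simp)
        moreover have "0 \<le> (a k j)\<^sup>2" by simp
        ultimately have "(t * a k j)\<^sup>2 / 2 \<le> (a k j)\<^sup>2" by linarith
        also have "\<dots> \<le> e * a k j" using elim j a0[of k j] by (simp add: power2_eq_square mult_right_mono)
        finally show "(t * a k j)\<^sup>2 / 2 \<le> e * a k j" .
      qed
      also have "\<dots> = e * \<sigma> k" by (simp add: \<sigma>_def sum_distrib_left)
      also have "\<dots> \<le> e * L" using elim e by simp
      also have "\<dots> < r" using r L0 by (simp add: e_def field_simps)
      finally show ?case by simp
    qed
    then show "\<exists>no. \<forall>k\<ge>no. norm ((\<Prod>j<N k. 1 - t * a k j) - exp (- t * \<sigma> k) - 0) < r"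
      by (simp add: eventually_sequentially)
  qed
  have "(\<lambda>k. exp (- \<sigma> k)) \<longlonglongrightarrow> p"
  proof -
    have "(\<lambda>k. (\<Prod>j<N k. 1 - 1 * a k j) - ((\<Prod>j<N k. 1 - 1 * a k j) - exp (- 1 * \<sigma> k))) \<longlonglongrightarrow> p - 0"
      by (intro tendsto_diff D) (use prodp in \<open>auto intro: tendsto_eventually\<close>)
    then show ?thesis by simp
  qed
  then have "(\<lambda>k. ln (exp (- \<sigma> k))) \<longlonglongrightarrow> ln p" using p by (intro tendsto_ln) auto
  then have sig: "\<sigma> \<longlonglongrightarrow> L" unfolding L_def using tendsto_minus by fastforce
  then show "(\<lambda>k. \<Sum>j<N k. a k j) \<longlonglongrightarrow> - ln p" unfolding \<sigma>_def[abs_def] L_def .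
  fix t :: real assume t: "0 \<le> t" "t \<le> 1"
  have "(\<lambda>k. exp (- t * \<sigma> k) + ((\<Prod>j<N k. 1 - t * a k j) - exp (- t * \<sigma> k))) \<longlonglongrightarrow> exp (- t * L) + 0"
    by (intro tendsto_add D[OF t] tendsto_exp tendsto_mult sig tendsto_const)
  then show "(\<lambda>k. \<Prod>j<N k. 1 - t * a k j) \<longlonglongrightarrow> exp (t * ln p)" by (simp add: L_def)
qed

lemma summable_shift_pow:
  fixes c :: "nat \<Rightarrow> real"
  assumes "summable (\<lambda>m. c m * r^m)" "r \<noteq> 0"
  shows "summable (\<lambda>m. c (m + n) * r^m)"
proof -
  have "summable (\<lambda>m. c (m + n) * r^(m + n))"
    using assms(1) by (subst summable_iff_shift)
  then have "summable (\<lambda>m. c (m + n) * r^(m + n) / r^n)" by (rule summable_divide)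
  moreover have "(\<lambda>m. c (m + n) * r^(m + n) / r^n) = (\<lambda>m. c (m + n) * r^m)"
    using assms(2) by (simp add: power_add fun_eq_iff)
  ultimately show ?thesis by simp
qed

lemma powser_unique:
  fixes c d :: "nat \<Rightarrow> real"
  assumes c0: "\<And>m. 0 \<le> c m" and d0: "\<And>m. 0 \<le> d m"
    and eq: "\<And>s. 0 < s \<Longrightarrow> s < 1 \<Longrightarrow> (\<lambda>m. c m * s^m) sums f s \<and> (\<lambda>m. d m * s^m) sums f s"
  shows "c = d"
proof -
  define e where "e m = c m - d m" for m
  have esum0: "(\<lambda>m. e m * s^m) sums 0" if "0 < s" "s < 1" for s
    using sums_diff[OF conjunct1[OF eq[OF that]] conjunct2[OF eq[OF that]]]
    by (simp add: e_def left_diff_distrib)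
  have r: "(0::real) < 1/2" "(1/2::real) < 1" by auto
  have sc: "summable (\<lambda>m. c m * (1/2)^m)" using eq[OF r] sums_summable by blast
  have sd: "summable (\<lambda>m. d m * (1/2)^m)" using eq[OF r] sums_summable by blast
  have "e n = 0" for n
  proof (induction n rule: less_induct)
    case (less n)
    define g where "g x = (\<Sum>m. e (m + n) * x^m)" for x :: real
    have sums_g: "(\<lambda>m. e (m + n) * x^m) sums g x" if x: "norm x < 1/2" for x
    proof -
      have "summable (\<lambda>m. c (m + n) * (1/2)^m + d (m + n) * (1/2)^m)"
        by (intro summable_add summable_shift_pow sc sd) auto
      then have "summable (\<lambda>m. norm (e (m + n) * x^m))"
      proof (rule summable_comparison_test'[where N=0])
        fix m
        have "norm (e (m + n) * x^m) \<le> (c (m + n) + d (m + n)) * \<bar>x\<bar>^m"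
        proof -
          have "\<bar>c (m + n) - d (m + n)\<bar> \<le> c (m + n) + d (m + n)" using c0[of "m+n"] d0[of "m+n"] by linarith
          then have "\<bar>c (m + n) - d (m + n)\<bar> * \<bar>x\<bar>^m \<le> (c (m + n) + d (m + n)) * \<bar>x\<bar>^m"
            by (rule mult_right_mono) simp
          then show ?thesis by (simp add: e_def abs_mult power_abs)
        qed
        also have "\<dots> \<le> (c (m + n) + d (m + n)) * (1/2)^m"
          using x c0 d0 by (intro mult_left_mono power_mono) auto
        finally show "norm (norm (e (m + n) * x^m)) \<le> c (m + n) * (1/2)^m + d (m + n) * (1/2)^m"
          by (simp add: algebra_simps)
      qed
      from summable_sums[OF summable_norm_cancel[OF this]] show ?thesis unfolding g_def .
    qed
    have lim: "(g \<longlongrightarrow> e n) (at 0)"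
      using powser_limit_0[of "1/2" "\<lambda>m. e (m + n)" g] sums_g by simp
    have g0: "g x = 0" if x: "0 < x" "x < 1/2" for x
    proof -
      have "(\<lambda>m. e m * x^m) sums 0" using esum0 x by simp
      moreover have "(\<Sum>i<n. e i * x^i) = 0" using less.IH by simp
      ultimately have "(\<lambda>m. e (m + n) * x^(m + n)) sums 0"
        using sums_iff_shift[where f="\<lambda>m. e m * x^m" and n=n and s=0] by simp
      then have "(\<lambda>m. e (m + n) * x^(m + n) / x^n) sums (0 / x^n)" by (rule sums_divide)
      moreover have "(\<lambda>m. e (m + n) * x^(m + n) / x^n) = (\<lambda>m. e (m + n) * x^m)"
        using x by (simp add: power_add fun_eq_iff)
      ultimately have "(\<lambda>m. e (m + n) * x^m) sums 0" by simp
      then show ?thesis unfolding g_def by (simp add: sums_iff)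
    qed
    have l1: "(g \<longlongrightarrow> e n) (at_right 0)"
      using tendsto_mono[OF at_le[OF subset_UNIV] lim] .
    have "eventually (\<lambda>x. g x = 0) (at_right (0::real))"
      unfolding eventually_at_right_field using g0 by (intro exI[of _ "1/2"]) auto
    then have l2: "(g \<longlongrightarrow> 0) (at_right 0)" by (rule tendsto_eventually)
    show ?case using tendsto_unique[OF trivial_limit_at_right_real l1 l2] .
  qed
  then show ?thesis by (auto simp: e_def fun_eq_iff)
qed


context rcs begin

lemma hit_mono: "C \<subseteq> D \<Longrightarrow> hit C \<subseteq> hit D"
  unfolding hit_def by auto

lemma no_atom_hit:
  assumes [measurable]: "B \<in> sets borel" and B: "B \<subseteq> {0<..<1}"
    and fin: "AE \<omega> in M. finite (B \<inter> S \<omega>)"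
  shows "(\<lambda>n. prob (hit (B \<inter> ball x (1 / Suc n)))) \<longlonglongrightarrow> 0"
proof -
  define A where "A n = hit (B \<inter> ball x (1 / Suc n))" for n
  have Am: "range A \<subseteq> sets M" unfolding A_def by auto
  have dA: "decseq A"
  proof (rule decseq_SucI)
    fix n
    have "ball x (1 / Suc (Suc n)) \<subseteq> ball x (1 / Suc n)"
      by (intro subset_ball) (simp add: frac_le)
    then show "A (Suc n) \<subseteq> A n" unfolding A_def by (intro hit_mono) auto
  qed
  have xB: "{x} \<inter> B \<in> sets borel" by measurable
  have "emeasure lborel ({x} \<inter> B) = 0"
    by (rule emeasure_lborel_countable) simp
  then have nx: "AE \<omega> in M. ({x} \<inter> B) \<inter> range (\<lambda>k. X k \<omega>) = {}"
    using nullc[OF xB] B by auto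
  have "AE \<omega> in M. \<omega> \<notin> (\<Inter>n. A n)"
    using fin nx
  proof eventually_elim
    case (elim \<omega>)
    show ?case
    proof
      assume w: "\<omega> \<in> (\<Inter>n. A n)"
      obtain d where d: "0 < d" "\<forall>y\<in>B \<inter> S \<omega>. y \<noteq> x \<longrightarrow> d \<le> dist x y"
        using finite_set_avoid[OF elim(1), of x] by blast
      obtain n :: nat where n: "1 / Suc n < d"
        using d(1) by (metis nat_approx_posE)
      have "\<omega> \<in> A n" using w by auto
      then obtain i where i: "X i \<omega> \<in> B" "dist x (X i \<omega>) < 1 / Suc n"
        unfolding A_def hit_def by auto
      have iS: "X i \<omega> \<in> B \<inter> S \<omega>" using i unfolding S_def by auto
      have "X i \<omega> \<noteq> x" using elim(2) i(1) by auto
      then have "d \<le> dist x (X i \<omega>)" using d iS by auto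
      then show False using i n by simp
    qed
  qed
  then have "prob (\<Inter>n. A n) = 0"
    using Am by (subst prob_eq_0) auto
  then show ?thesis
    using finite_Lim_measure_decseq[OF Am dA] unfolding A_def by simp
qed

lemma q_small:
  assumes [measurable]: "B \<in> sets borel" and B: "B \<subseteq> {0<..<1}"
    and fin: "AE \<omega> in M. finite (B \<inter> S \<omega>)" and e: "0 < e"
  shows "eventually (\<lambda>k. \<forall>j<2^k. q B k j \<le> e) sequentially"
proof -
  have "\<exists>\<delta>>0. prob (hit (B \<inter> ball x \<delta>)) < e" for x
  proof -
    from no_atom_hit[OF assms(1,2,3), of x] e
    have "eventually (\<lambda>n. prob (hit (B \<inter> ball x (1 / Suc n))) < e) sequentially"
      by (rule order_tendstoD)
    then obtain n where "prob (hit (B \<inter> ball x (1 / Suc n))) < e"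
      by (auto simp: eventually_sequentially)
    then show ?thesis by (intro exI[of _ "1 / Suc n"]) auto
  qed
  then obtain \<delta> where \<delta>: "\<And>x. 0 < \<delta> x" "\<And>x. prob (hit (B \<inter> ball x (\<delta> x))) < e"
    by metis
  obtain e0 where e0: "0 < e0" "\<And>y. y \<in> {0..1} \<Longrightarrow> \<exists>G \<in> (\<lambda>x. ball x (\<delta> x)) ` {0..1}. ball y e0 \<subseteq> G"
  proof (rule Heine_Borel_lemma[of "{0..1::real}" "(\<lambda>x. ball x (\<delta> x)) ` {0..1}"])
    show "compact {0..1::real}" by simp
    show "{0..1::real} \<subseteq> \<Union> ((\<lambda>x. ball x (\<delta> x)) ` {0..1})"
      using \<delta>(1) by force
  qed auto
  obtain K where K: "1 / e0 < 2^K"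
    using real_arch_pow[of 2 "1 / e0"] by auto
  show ?thesis
  proof (rule eventually_sequentiallyI[of K], intro allI impI)
    fix k j assume k: "K \<le> k" and j: "j < (2::nat)^k"
    have "(2::real)^K \<le> 2^k" using k by simp
    with K have "1 / e0 < 2^k" by linarith
    then have small: "1 / 2^k < e0" using e0(1) by (simp add: field_simps)
    define y where "y = real j / 2^k"
    have y01: "y \<in> {0..1}" unfolding y_def using j
      by (auto simp: field_simps)
    obtain x where x: "x \<in> {0..1}" "ball y e0 \<subseteq> ball x (\<delta> x)"
      using e0(2)[OF y01] by auto
    have "cell k j \<subseteq> ball y e0"
    proof
      fix z assume "z \<in> cell k j"
      then have "y \<le> z" "z < y + 1 / 2^k" unfolding cell_def y_def by (auto simp: add_divide_distrib)
      then show "z \<in> ball y e0" using small by (auto simp: dist_real_def)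
    qed
    then have "hit (B \<inter> cell k j) \<subseteq> hit (B \<inter> ball x (\<delta> x))"
      using x by (intro hit_mono) auto
    then have "q B k j \<le> prob (hit (B \<inter> ball x (\<delta> x)))"
      unfolding q_def by (intro finite_measure_mono) auto
    then show "q B k j \<le> e" using \<delta>(2)[of x] by simp
  qed
qed

lemma nat_comp_meas:
  assumes "f \<in> measurable M (count_space UNIV)"
  shows "(\<lambda>\<omega>. g (f \<omega>) :: real) \<in> borel_measurable M"
  using measurable_compose[OF assms, of g borel] by simp

lemma sum_q_le:
  assumes "1 \<le> k" and [measurable]: "B \<in> sets borel" and B: "B \<subseteq> {0<..<1}" and p: "0 < pB B"
  shows "(\<Sum>j<2^k. q B k j) \<le> - ln (pB B)"
proof -
  have "pB B = (\<Prod>j<2^k. 1 - q B k j)" by (rule pB_prod[OF assms(1-3)])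
  also have "\<dots> \<le> (\<Prod>j<2^k. exp (- q B k j))"
    using q_le1 one_minus_le_exp by (intro prod_mono) (auto simp: q_le1)
  also have "\<dots> = exp (- (\<Sum>j<2^k. q B k j))" by (simp add: exp_sum flip: sum_negf)
  finally have "ln (pB B) \<le> ln (exp (- (\<Sum>j<2^k. q B k j)))" using p by (subst ln_le_cancel_iff) auto
  then show ?thesis by simp
qed

lemma fin_imp_pos:
  assumes [measurable]: "B \<in> sets borel" and B: "B \<subseteq> {0<..<1}"
    and fin: "AE \<omega> in M. finite (B \<inter> S \<omega>)"
  shows "0 < pB B"
proof -
  obtain K where K: "\<And>k. K \<le> k \<Longrightarrow> \<forall>j<2^k. q B k j \<le> 1/2"
    using q_small[OF assms, of "1/2"] by (auto simp: eventually_sequentially)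
  define k where "k = max K 1"
  have "pB B = (\<Prod>j<2^k. 1 - q B k j)" by (rule pB_prod) (auto simp: k_def B)
  also have "0 < \<dots>" using K[of k] by (intro prod_pos) (auto simp: k_def)
  finally show ?thesis .
qed

lemma ecnt_infinite: "ecnt B \<omega> = \<infinity> \<longleftrightarrow> infinite (B \<inter> S \<omega>)"
  unfolding ecnt_def by (auto simp: emeasure_count_space_infinite emeasure_count_space_finite)

lemma pos_imp_fin:
  assumes [measurable]: "B \<in> sets borel" and B: "B \<subseteq> {0<..<1}" and p: "0 < pB B"
  shows "(\<integral>\<^sup>+\<omega>. ecnt B \<omega> \<partial>M) \<le> ennreal (- ln (pB B))"
    and "AE \<omega> in M. finite (B \<inter> S \<omega>)"
proof -
  have "(\<integral>\<^sup>+\<omega>. ecnt B \<omega> \<partial>M) = (\<integral>\<^sup>+\<omega>. liminf (\<lambda>k. ennreal (real (Zk B k \<omega>))) \<partial>M)"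
    by (intro nn_integral_cong) (simp add: ecnt_liminf)
  also have "\<dots> \<le> liminf (\<lambda>k. \<integral>\<^sup>+\<omega>. ennreal (real (Zk B k \<omega>)) \<partial>M)"
    by (rule nn_integral_liminf) simp
  also have "\<dots> = liminf (\<lambda>k. ennreal (\<Sum>j<2^k. q B k j))"
    by (simp add: nn_Zk)
  also have "\<dots> \<le> ennreal (- ln (pB B))"
  proof (rule Liminf_le)
    show "eventually (\<lambda>k. ennreal (\<Sum>j<2^k. q B k j) \<le> ennreal (- ln (pB B))) sequentially"
      using eventually_ge_at_top[of 1]
      by eventually_elim (intro ennreal_leI sum_q_le[OF _ assms])
  qed simp
  finally show le: "(\<integral>\<^sup>+\<omega>. ecnt B \<omega> \<partial>M) \<le> ennreal (- ln (pB B))" .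
  have "AE \<omega> in M. ecnt B \<omega> \<noteq> \<infinity>"
    by (rule nn_integral_PInf_AE) (use le in \<open>auto simp: top_unique\<close>)
  then show "AE \<omega> in M. finite (B \<inter> S \<omega>)"
  proof eventually_elim
    case (elim \<omega>)
    then show ?case using ecnt_infinite[of B \<omega>] by auto
  qed
qed

definition Nc :: "real set \<Rightarrow> 'a \<Rightarrow> nat" where
  "Nc B \<omega> = nat \<lfloor>enn2real (ecnt B \<omega>)\<rfloor>"

lemma Nc_card: "Nc B \<omega> = card (B \<inter> S \<omega>)"
proof (cases "finite (B \<inter> S \<omega>)")
  case True
  then show ?thesis unfolding Nc_def ecnt_def
    by (simp add: emeasure_count_space_finite ennreal_of_nat_eq_real_of_nat)
next
  case False
  then show ?thesis unfolding Nc_def ecnt_def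
    by (simp add: emeasure_count_space_infinite)
qed

lemma Nc_meas[measurable]:
  assumes [measurable]: "B \<in> sets borel"
  shows "Nc B \<in> measurable M (count_space UNIV)"
  unfolding Nc_def by measurable

lemma ecnt_Nc: "finite (B \<inter> S \<omega>) \<Longrightarrow> ecnt B \<omega> = ennreal (real (Nc B \<omega>))"
  unfolding Nc_card ecnt_def by (simp add: emeasure_count_space_finite ennreal_of_nat_eq_real_of_nat)

lemma pgf_lim:
  assumes [measurable]: "B \<in> sets borel" and B: "B \<subseteq> {0<..<1}" and p: "0 < pB B"
    and s: "0 \<le> s" "s \<le> 1"
  shows "(\<lambda>k. \<integral>\<omega>. s ^ Zk B k \<omega> \<partial>M) \<longlonglongrightarrow> exp ((1 - s) * ln (pB B))"
proof -
  have fin: "AE \<omega> in M. finite (B \<inter> S \<omega>)" by (rule pos_imp_fin(2)[OF assms(1-3)])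
  have lim: "(\<lambda>k. \<Prod>j<2^k. 1 - (1 - s) * q B k j) \<longlonglongrightarrow> exp ((1 - s) * ln (pB B))"
  proof (rule poisson_lim(2)[where a="q B" and N="\<lambda>k. 2^k"])
    show "eventually (\<lambda>k. (\<Prod>j<2^k. 1 - q B k j) = pB B) sequentially"
      using eventually_ge_at_top[of 1] by eventually_elim (simp add: pB_prod[OF _ assms(1,2)])
    show "\<And>e. 0 < e \<Longrightarrow> eventually (\<lambda>k. \<forall>j<2^k. q B k j \<le> e) sequentially"
      by (rule q_small[OF assms(1,2) fin])
  qed (use p s in \<open>auto simp: q_nonneg q_le1\<close>)
  have "eventually (\<lambda>k. (\<Prod>j<2^k. 1 - (1 - s) * q B k j) = (\<integral>\<omega>. s ^ Zk B k \<omega> \<partial>M)) sequentially"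
    using eventually_ge_at_top[of 1] by eventually_elim (simp add: pgf_Zk[OF _ assms(1,2)])
  from Lim_transform_eventually[OF lim this] show ?thesis .
qed

lemma pgf_N:
  assumes [measurable]: "B \<in> sets borel" and B: "B \<subseteq> {0<..<1}" and p: "0 < pB B"
    and s: "0 \<le> s" "s \<le> 1"
  shows "(\<integral>\<omega>. s ^ Nc B \<omega> \<partial>M) = exp ((1 - s) * ln (pB B))"
proof -
  have fin: "AE \<omega> in M. finite (B \<inter> S \<omega>)" by (rule pos_imp_fin(2)[OF assms(1-3)])
  have "(\<lambda>k. \<integral>\<omega>. s ^ Zk B k \<omega> \<partial>M) \<longlonglongrightarrow> (\<integral>\<omega>. s ^ Nc B \<omega> \<partial>M)"
  proof (rule integral_dominated_convergence[where w="\<lambda>_. 1"])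
    show "(\<lambda>\<omega>. s ^ Nc B \<omega>) \<in> borel_measurable M" by (rule nat_comp_meas) simp
    show "(\<lambda>\<omega>. s ^ Zk B k \<omega>) \<in> borel_measurable M" for k by (rule nat_comp_meas) simp
    show "integrable M (\<lambda>_. 1::real)" by simp
    show "AE \<omega> in M. (\<lambda>k. s ^ Zk B k \<omega>) \<longlonglongrightarrow> s ^ Nc B \<omega>"
      using fin AE_space
    proof eventually_elim
      case (elim \<omega>)
      from Zk_ev_fin[OF elim(2,1)]
      have "eventually (\<lambda>k. s ^ Nc B \<omega> = s ^ Zk B k \<omega>) sequentially"
        by eventually_elim (simp add: Nc_card)
      then show ?case by (rule Lim_transform_eventually[OF tendsto_const])
    qed
    show "AE \<omega> in M. norm (s ^ Zk B k \<omega>) \<le> 1" for k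
      using s by (auto simp: power_le_one)
  qed
  with pgf_lim[OF assms] show ?thesis by (rule LIMSEQ_unique[rotated])
qed

lemma series_Nc:
  assumes [measurable]: "B \<in> sets borel"
  shows "(\<integral>\<^sup>+\<omega>. ennreal (h (Nc B \<omega>)) \<partial>M) = (\<Sum>m. ennreal (h m) * emeasure M {\<omega> \<in> space M. Nc B \<omega> = m})"
proof -
  have "(\<integral>\<^sup>+\<omega>. ennreal (h (Nc B \<omega>)) \<partial>M) = (\<integral>\<^sup>+\<omega>. (\<Sum>m. ennreal (h m) * indicator {\<omega> \<in> space M. Nc B \<omega> = m} \<omega>) \<partial>M)"
  proof (intro nn_integral_cong)
    fix \<omega> assume w: "\<omega> \<in> space M"
    have "(\<Sum>m. ennreal (h m) * indicator {\<omega> \<in> space M. Nc B \<omega> = m} \<omega>)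
        = (\<Sum>m\<in>{Nc B \<omega>}. ennreal (h m) * indicator {\<omega> \<in> space M. Nc B \<omega> = m} \<omega>)"
      by (rule suminf_finite) (auto simp: indicator_def)
    also have "\<dots> = ennreal (h (Nc B \<omega>))" using w by (simp add: indicator_def)
    finally show "ennreal (h (Nc B \<omega>)) = (\<Sum>m. ennreal (h m) * indicator {\<omega> \<in> space M. Nc B \<omega> = m} \<omega>)" by simp
  qed
  also have "\<dots> = (\<Sum>m. \<integral>\<^sup>+\<omega>. ennreal (h m) * indicator {\<omega> \<in> space M. Nc B \<omega> = m} \<omega> \<partial>M)"
    by (rule nn_integral_suminf) simp
  also have "\<dots> = (\<Sum>m. ennreal (h m) * emeasure M {\<omega> \<in> space M. Nc B \<omega> = m})"
    by (intro suminf_cong nn_integral_cmult_indicator) simp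
  finally show ?thesis .
qed

lemma poisson_mean_sums:
  fixes \<mu> :: real
  shows "(\<lambda>m. real m * (exp (- \<mu>) * \<mu>^m / fact m)) sums \<mu>"
proof -
  have e: "(\<lambda>i. \<mu>^i / fact i) sums exp \<mu>"
    using exp_converges[of \<mu>] by (simp add: divide_inverse mult.commute)
  have "(\<lambda>i. exp (- \<mu>) * \<mu> * (\<mu>^i / fact i)) sums (exp (- \<mu>) * \<mu> * exp \<mu>)"
    by (rule sums_mult[OF e])
  moreover have "(\<lambda>i. exp (- \<mu>) * \<mu> * (\<mu>^i / fact i)) = (\<lambda>i. real (i + 1) * (exp (- \<mu>) * \<mu>^(i + 1) / fact (i + 1)))"
  proof
    fix i :: nat
    have f: "(fact (i + 1) :: real) = real (i + 1) * fact i" by (simp add: fact_Suc)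
    have nz: "real (i + 1) \<noteq> 0" "(fact i :: real) \<noteq> 0" by auto
    have g: "\<And>r a b::real. r \<noteq> 0 \<Longrightarrow> r * (a / (r * b)) = a / b"
      by (case_tac "b = 0") (simp_all add: field_simps)
    have "real (i + 1) * (exp (- \<mu>) * \<mu>^(i + 1) / fact (i + 1)) = exp (- \<mu>) * \<mu>^(i + 1) / fact i"
      unfolding f by (rule g[OF nz(1)])
    also have "\<dots> = exp (- \<mu>) * \<mu> * (\<mu>^i / fact i)" by (simp add: power_Suc field_simps)
    finally show "exp (- \<mu>) * \<mu> * (\<mu>^i / fact i) = real (i + 1) * (exp (- \<mu>) * \<mu>^(i + 1) / fact (i + 1))" by simp
  qed
  moreover have "exp (- \<mu>) * \<mu> * exp \<mu> = \<mu>" by (simp add: exp_minus field_simps)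
  ultimately have "(\<lambda>i. real (i + 1) * (exp (- \<mu>) * \<mu>^(i + 1) / fact (i + 1))) sums \<mu>" by simp
  then show ?thesis
    using sums_iff_shift[where f="\<lambda>m. real m * (exp (- \<mu>) * \<mu>^m / fact m)" and n=1 and s=\<mu>] by simp
qed

lemma dist_Nc:
  assumes [measurable]: "B \<in> sets borel" and B: "B \<subseteq> {0<..<1}" and p: "0 < pB B"
  shows "prob {\<omega> \<in> space M. Nc B \<omega> = m} = exp (- (- ln (pB B))) * (- ln (pB B))^m / fact m"
proof -
  define \<mu> where "\<mu> = - ln (pB B)"
  define c where "c m = prob {\<omega> \<in> space M. Nc B \<omega> = m}" for m
  define d where "d m = exp (- \<mu>) * \<mu>^m / fact m" for m
  have mu0: "0 \<le> \<mu>"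
  proof -
    have "pB B \<le> 1" unfolding pB_def by simp
    then show ?thesis using p by (simp add: \<mu>_def)
  qed
  have "c = d"
  proof (rule powser_unique[where f="\<lambda>s. exp ((1 - s) * ln (pB B))"])
    show "0 \<le> c m" for m by (simp add: c_def)
    show "0 \<le> d m" for m using mu0 by (simp add: d_def)
    fix s :: real assume s: "0 < s" "s < 1"
    have int: "integrable M (\<lambda>\<omega>. s ^ Nc B \<omega>)"
      by (rule integrable_const_bound[where B=1]) (use s in \<open>auto simp: power_le_one intro: nat_comp_meas\<close>)
    have "(\<Sum>m. ennreal (s^m) * emeasure M {\<omega> \<in> space M. Nc B \<omega> = m}) = (\<integral>\<^sup>+\<omega>. ennreal (s ^ Nc B \<omega>) \<partial>M)"
      by (rule series_Nc[symmetric]) simp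
    also have "\<dots> = ennreal (\<integral>\<omega>. s ^ Nc B \<omega> \<partial>M)"
      by (rule nn_integral_eq_integral[OF int]) (use s in auto)
    also have "\<dots> = ennreal (exp ((1 - s) * ln (pB B)))"
      using pgf_N[OF assms, of s] s by simp
    finally have "(\<lambda>m. ennreal (c m * s^m)) sums ennreal (exp ((1 - s) * ln (pB B)))"
      using summable_sums[OF summableI, of "\<lambda>m. ennreal (c m * s^m)"] s
      by (simp add: c_def emeasure_eq_measure ennreal_mult' mult.commute)
    then have h1: "(\<lambda>m. c m * s^m) sums exp ((1 - s) * ln (pB B))"
      using s by (subst (asm) sums_ennreal) (auto simp: c_def)
    have "(\<lambda>m. exp (- \<mu>) * ((\<mu> * s)^m / fact m)) sums (exp (- \<mu>) * exp (\<mu> * s))"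
      using exp_converges[of "\<mu> * s"] by (intro sums_mult) (simp add: divide_inverse mult.commute)
    moreover have "exp (- \<mu>) * exp (\<mu> * s) = exp ((1 - s) * ln (pB B))"
      by (simp add: \<mu>_def mult_exp_exp algebra_simps)
    moreover have "(\<lambda>m. d m * s^m) = (\<lambda>m. exp (- \<mu>) * ((\<mu> * s)^m / fact m))"
      by (auto simp: fun_eq_iff d_def power_mult_distrib field_simps)
    ultimately have "(\<lambda>m. d m * s^m) sums exp ((1 - s) * ln (pB B))"
      by simp
    with h1 show "(\<lambda>m. c m * s^m) sums exp ((1 - s) * ln (pB B)) \<and> (\<lambda>m. d m * s^m) sums exp ((1 - s) * ln (pB B))"
      by simp
  qed
  then have "c m = d m" by simp
  then show ?thesis by (simp add: c_def d_def \<mu>_def)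
qed

lemma mean_Nc:
  assumes [measurable]: "B \<in> sets borel" and B: "B \<subseteq> {0<..<1}" and p: "0 < pB B"
  shows "(\<integral>\<^sup>+\<omega>. ecnt B \<omega> \<partial>M) = ennreal (- ln (pB B))"
proof -
  define \<mu> where "\<mu> = - ln (pB B)"
  have fin: "AE \<omega> in M. finite (B \<inter> S \<omega>)" by (rule pos_imp_fin(2)[OF assms])
  have mu0: "0 \<le> \<mu>"
  proof -
    have "pB B \<le> 1" unfolding pB_def by simp
    then show ?thesis using p by (simp add: \<mu>_def)
  qed
  have "(\<integral>\<^sup>+\<omega>. ecnt B \<omega> \<partial>M) = (\<integral>\<^sup>+\<omega>. ennreal (real (Nc B \<omega>)) \<partial>M)"
    by (rule nn_integral_cong_AE) (use fin in \<open>auto simp: ecnt_Nc\<close>)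
  also have "\<dots> = (\<Sum>m. ennreal (real m) * emeasure M {\<omega> \<in> space M. Nc B \<omega> = m})"
    by (rule series_Nc) simp
  also   have "(\<Sum>m. ennreal (real m) * emeasure M {\<omega> \<in> space M. Nc B \<omega> = m}) = (\<Sum>m. ennreal (real m * (exp (- \<mu>) * \<mu>^m / fact m)))"
  proof (intro suminf_cong)
    fix m
    have "emeasure M {\<omega> \<in> space M. Nc B \<omega> = m} = ennreal (exp (- \<mu>) * \<mu>^m / fact m)"
      using dist_Nc[OF assms, of m] by (simp add: emeasure_eq_measure \<mu>_def)
    moreover have "ennreal (real m) * ennreal (exp (- \<mu>) * \<mu>^m / fact m) = ennreal (real m * (exp (- \<mu>) * \<mu>^m / fact m))"
      using mu0 by (intro ennreal_mult[symmetric]) auto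
    ultimately show "ennreal (real m) * emeasure M {\<omega> \<in> space M. Nc B \<omega> = m} = ennreal (real m * (exp (- \<mu>) * \<mu>^m / fact m))"
      by simp
  qed
  also have "\<dots> = ennreal \<mu>"
  proof -
    have "(\<lambda>m. ennreal (real m * (exp (- \<mu>) * \<mu>^m / fact m))) sums ennreal \<mu>"
      using poisson_mean_sums[of \<mu>] mu0 by (subst sums_ennreal) auto
    then show ?thesis by (rule sums_unique[symmetric])
  qed
  finally show ?thesis by (simp add: \<mu>_def)
qed

end


context rcs begin

definition nu :: "real set \<Rightarrow> ennreal" where
  "nu A = (\<integral>\<^sup>+\<omega>. ecnt (A \<inter> {0<..<1}) \<omega> \<partial>M)"

lemma nu_ca: "countably_additive (sets borel) nu"
proof (rule countably_additiveI)
  fix A :: "nat \<Rightarrow> real set"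
  assume A: "range A \<subseteq> sets borel" "disjoint_family A" "\<Union> (range A) \<in> sets borel"
  have [measurable]: "A i \<in> sets borel" for i using A(1) by auto
  have "(\<Sum>i. nu (A i)) = (\<integral>\<^sup>+\<omega>. (\<Sum>i. ecnt (A i \<inter> {0<..<1}) \<omega>) \<partial>M)"
    unfolding nu_def by (rule nn_integral_suminf[symmetric]) simp
  also have "\<dots> = (\<integral>\<^sup>+\<omega>. ecnt (\<Union> (range A) \<inter> {0<..<1}) \<omega> \<partial>M)"
  proof (intro nn_integral_cong)
    fix \<omega>
    have d: "disjoint_family (\<lambda>i. A i \<inter> {0<..<1} \<inter> S \<omega>)"
      using A(2) unfolding disjoint_family_on_def by auto
    have "(\<Sum>i. ecnt (A i \<inter> {0<..<1}) \<omega>) = emeasure (count_space UNIV) (\<Union>i. A i \<inter> {0<..<1} \<inter> S \<omega>)"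
      unfolding ecnt_def by (rule suminf_emeasure[OF _ d]) auto
    also have "(\<Union>i. A i \<inter> {0<..<1} \<inter> S \<omega>) = \<Union> (range A) \<inter> {0<..<1} \<inter> S \<omega>" by auto
    finally show "(\<Sum>i. ecnt (A i \<inter> {0<..<1}) \<omega>) = ecnt (\<Union> (range A) \<inter> {0<..<1}) \<omega>"
      unfolding ecnt_def .
  qed
  finally show "(\<Sum>i. nu (A i)) = nu (\<Union> (range A))" unfolding nu_def .
qed

lemma nu_pos: "positive (sets borel) nu"
  unfolding positive_def nu_def ecnt_def by simp

definition numeas :: "real measure" where
  "numeas = measure_of UNIV (sets borel) nu"

lemma sets_numeas[simp]: "sets numeas = sets borel"
proof -
  have "sigma_sets UNIV (sets borel) = sets (borel::real measure)" using sets.sigma_sets_eq[of borel] by simp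
  then show ?thesis unfolding numeas_def by (simp add: sets_measure_of_conv)
qed

lemma emeasure_numeas: "A \<in> sets borel \<Longrightarrow> emeasure numeas A = nu A"
  unfolding numeas_def
  by (rule emeasure_measure_of_sigma[OF _ nu_pos nu_ca]) (auto simp: sets.sigma_algebra_axioms[of borel, simplified])

lemma numeas_ac: "absolutely_continuous lborel numeas"
  unfolding absolutely_continuous_def
proof
  fix A :: "real set" assume A: "A \<in> null_sets lborel"
  then have Ab[measurable]: "A \<in> sets borel" and A0: "emeasure lborel A = 0" by auto
  have "emeasure lborel (A \<inter> {0<..<1}) \<le> emeasure lborel A"
    by (rule emeasure_mono) auto
  then have "emeasure lborel (A \<inter> {0<..<1}) = 0" using A0 by simp
  then have ae: "AE \<omega> in M. (A \<inter> {0<..<1}) \<inter> range (\<lambda>k. X k \<omega>) = {}"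
    by (intro nullc) auto
  have "nu A = (\<integral>\<^sup>+\<omega>. 0 \<partial>M)"
    unfolding nu_def by (rule nn_integral_cong_AE) (use ae in \<open>auto simp: ecnt_def S_def\<close>)
  then have "emeasure numeas A = 0" by (simp add: emeasure_numeas)
  then show "A \<in> null_sets numeas" using Ab by (auto simp: null_sets_def)
qed

lemma exists_r:
  obtains r :: "real \<Rightarrow> ennreal" where "r \<in> borel_measurable borel"
    "\<And>A. A \<in> sets borel \<Longrightarrow> set_nn_integral lborel A r = nu A"
proof -
  obtain r where r: "r \<in> borel_measurable lborel" "density lborel r = numeas"
    using sigma_finite_measure.Radon_Nikodym[OF lborel.sigma_finite_measure_axioms numeas_ac] by auto
  have rm[measurable]: "r \<in> borel_measurable borel" using r(1) by simp
  show ?thesis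
  proof (rule that[OF rm])
    fix A :: "real set" assume [measurable]: "A \<in> sets borel"
    have "set_nn_integral lborel A r = emeasure (density lborel r) A"
      by (rule emeasure_density[symmetric]) auto
    also have "\<dots> = nu A" using r(2) by (simp add: emeasure_numeas)
    finally show "set_nn_integral lborel A r = nu A" .
  qed
qed

lemma nu_sub: "A \<subseteq> {0<..<1} \<Longrightarrow> nu A = (\<integral>\<^sup>+\<omega>. ecnt A \<omega> \<partial>M)"
  unfolding nu_def by (simp add: Int_absorb2)

end


context rcs begin

lemma pB_nonneg: "0 \<le> pB B" unfolding pB_def by simp

lemma inf_imp_p0:
  assumes [measurable]: "B \<in> sets borel" and B: "B \<subseteq> {0<..<1}" and p: "\<not> 0 < pB B"
  shows "(\<integral>\<^sup>+\<omega>. ecnt B \<omega> \<partial>M) = \<infinity>"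
proof (rule ccontr)
  assume "(\<integral>\<^sup>+\<omega>. ecnt B \<omega> \<partial>M) \<noteq> \<infinity>"
  then have "AE \<omega> in M. ecnt B \<omega> \<noteq> \<infinity>" by (intro nn_integral_PInf_AE) auto
  then have "AE \<omega> in M. finite (B \<inter> S \<omega>)"
  proof eventually_elim
    case (elim \<omega>)
    then show ?case using ecnt_infinite[of B \<omega>] by auto
  qed
  then have "0 < pB B" by (rule fin_imp_pos[OF assms(1,2)])
  with p show False by simp
qed

lemma hit_ae:
  assumes [measurable]: "A \<in> sets borel" and A: "A \<subseteq> {0<..<1}"
    and inf: "(\<integral>\<^sup>+\<omega>. ecnt A \<omega> \<partial>M) = \<infinity>"
  shows "AE \<omega> in M. \<omega> \<in> hit A"
proof -
  have "\<not> 0 < pB A"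
  proof
    assume "0 < pB A"
    then have "(\<integral>\<^sup>+\<omega>. ecnt A \<omega> \<partial>M) = ennreal (- ln (pB A))" by (rule mean_Nc[OF assms(1,2)])
    with inf show False by simp
  qed
  then have "prob (space M - hit A) = 0" using pB_nonneg[of A] unfolding pB_def by simp
  then have "AE \<omega> in M. \<omega> \<notin> space M - hit A" by (subst (asm) prob_eq_0) auto
  then show ?thesis by (rule AE_mp) (auto intro!: AE_I2)
qed

lemma ae_infinite_from_bounds:
  assumes "\<And>m. AE \<omega> in M. finite (B \<inter> S \<omega>) \<longrightarrow> m \<le> card (B \<inter> S \<omega>)"
  shows "AE \<omega> in M. infinite (B \<inter> S \<omega>)"
proof -
  have "AE \<omega> in M. \<forall>m. finite (B \<inter> S \<omega>) \<longrightarrow> m \<le> card (B \<inter> S \<omega>)"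
    using assms by (subst AE_all_countable) auto
  then show ?thesis
  proof eventually_elim
    case (elim \<omega>)
    show ?case
    proof
      assume "finite (B \<inter> S \<omega>)"
      with elim[rule_format, of "Suc (card (B \<inter> S \<omega>))"] show False by simp
    qed
  qed
qed

lemma lborel_cells:
  assumes [measurable]: "A \<in> sets borel" and A: "A \<subseteq> {0<..<1}"
  shows "emeasure lborel A \<le> ennreal (real (card {j \<in> {..<2^k}. 0 < emeasure lborel (A \<inter> cell k j)}) / 2^k)"
proof -
  define J where "J = {j \<in> {..<2^k}. 0 < emeasure lborel (A \<inter> cell k j)}"
  have cov: "A = (\<Union>j\<in>{..<2^k}. A \<inter> cell k j)"
  proof -
    have "\<And>x. x \<in> A \<Longrightarrow> x \<in> cell k (idx k x) \<and> idx k x < 2^k"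
      using A cell_iff idx_lt by (auto simp: subset_eq)
    then show ?thesis by blast
  qed
  have disj: "disjoint_family_on (\<lambda>j. A \<inter> cell k j) {..<2^k}"
    unfolding disjoint_family_on_def
  proof (intro ballI impI)
    fix i j :: nat assume "i \<noteq> j"
    show "A \<inter> cell k i \<inter> (A \<inter> cell k j) = {}"
    proof (rule ccontr)
      assume "A \<inter> cell k i \<inter> (A \<inter> cell k j) \<noteq> {}"
      then obtain x where x: "x \<in> A" "x \<in> cell k i" "x \<in> cell k j" by auto
      then have "idx k x = i" "idx k x = j" using A cell_iff[of x k] by (auto simp: subset_eq)
      with \<open>i \<noteq> j\<close> show False by simp
    qed
  qed
  have "emeasure lborel A = (\<Sum>j<2^k. emeasure lborel (A \<inter> cell k j))"
    by (subst cov, rule sum_emeasure[symmetric]) (use disj in auto)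
  also have "\<dots> = (\<Sum>j\<in>J. emeasure lborel (A \<inter> cell k j))"
    unfolding J_def by (rule sum.mono_neutral_right) (auto simp: not_less zero_less_iff_neq_zero)
  also have "\<dots> \<le> (\<Sum>j\<in>J. ennreal (1 / 2^k))"
  proof (intro sum_mono)
    fix j
    have "emeasure lborel (A \<inter> cell k j) \<le> emeasure lborel (cell k j)"
      by (rule emeasure_mono) auto
    also have "\<dots> = ennreal (1 / 2^k)"
      unfolding cell_def by (subst emeasure_lborel_Ico) (auto simp: field_simps)
    finally show "emeasure lborel (A \<inter> cell k j) \<le> ennreal (1 / 2^k)" .
  qed
  also have "\<dots> = ennreal (\<Sum>j\<in>J. 1 / 2^k)"
    by (rule sum_ennreal) simp
  also have "\<dots> = ennreal (real (card J) / 2^k)"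
    by simp
  finally show ?thesis unfolding J_def .
qed

lemma case1:
  assumes [measurable]: "A \<in> sets borel" and A: "A \<subseteq> {0<..<1}" and pos: "0 < emeasure lborel A"
    and inf: "\<And>A'. A' \<in> sets borel \<Longrightarrow> A' \<subseteq> A \<Longrightarrow> 0 < emeasure lborel A' \<Longrightarrow> (\<integral>\<^sup>+\<omega>. ecnt A' \<omega> \<partial>M) = \<infinity>"
  shows "AE \<omega> in M. infinite (A \<inter> S \<omega>)"
proof (rule ae_infinite_from_bounds)
  fix m :: nat
  have "emeasure lborel A \<le> emeasure lborel {0<..<1::real}" by (rule emeasure_mono[OF A]) auto
  then have fin: "emeasure lborel A \<le> 1" by simp
  define L where "L = enn2real (emeasure lborel A)"
  have "emeasure lborel A \<noteq> \<top>" using fin by (auto simp: top_unique)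
  then have AL: "emeasure lborel A = ennreal L" unfolding L_def by (simp add: ennreal_enn2real_if)
  have L0: "0 < L" using pos unfolding AL by simp
  obtain K where K: "real m / L < 2^K" using real_arch_pow[of 2 "real m / L"] by auto
  define k where "k = max K 1"
  have "(2::real)^K \<le> 2^k" unfolding k_def by simp
  then have "L * 2^K \<le> L * 2^k" using L0 by simp
  moreover have "real m < L * 2^K" using K L0 by (simp add: field_simps)
  ultimately have mk: "real m \<le> L * 2^k" by simp
  define J where "J = {j \<in> {..<2^k}. 0 < emeasure lborel (A \<inter> cell k j)}"
  have "ennreal L \<le> ennreal (real (card J) / 2^k)"
    using lborel_cells[OF assms(1,2), of k] AL unfolding J_def by simp
  then have "L \<le> real (card J) / 2^k" using L0 by (simp add: ennreal_le_iff)
  then have "L * 2^k \<le> real (card J)" by (simp add: field_simps)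
  with mk have mJ: "m \<le> card J" by linarith
  have "AE \<omega> in M. \<forall>j\<in>J. \<omega> \<in> hit (A \<inter> cell k j)"
  proof (rule AE_finite_allI)
    show "finite J" unfolding J_def by simp
    fix j assume j: "j \<in> J"
    show "AE \<omega> in M. \<omega> \<in> hit (A \<inter> cell k j)"
    proof (rule hit_ae)
      show "(\<integral>\<^sup>+\<omega>. ecnt (A \<inter> cell k j) \<omega> \<partial>M) = \<infinity>"
        by (rule inf) (use j in \<open>auto simp: J_def\<close>)
    qed (use A in auto)
  qed
  then show "AE \<omega> in M. finite (A \<inter> S \<omega>) \<longrightarrow> m \<le> card (A \<inter> S \<omega>)"
    using AE_space
  proof eventually_elim
    case (elim \<omega>)
    show ?case
    proof
      assume f: "finite (A \<inter> S \<omega>)"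
      have "J \<subseteq> {j \<in> {..<2^k}. \<omega> \<in> hit (A \<inter> cell k j)}" using elim unfolding J_def by auto
      then have "card J \<le> Zk A k \<omega>"
        unfolding Zk_def Zk_set[OF elim(2)] by (intro card_mono) auto
      also have "\<dots> \<le> card (A \<inter> S \<omega>)" by (rule Zk_le[OF f])
      finally show "m \<le> card (A \<inter> S \<omega>)" using mJ by simp
    qed
  qed
qed

end


context rcs begin

lemma poisson_cdf_lim:
  "((\<lambda>x::real. \<Sum>i\<le>m. exp (- x) * x^i / fact i) \<longlongrightarrow> 0) at_top"
proof -
  have "((\<lambda>x::real. \<Sum>i\<le>m. (x^i / exp x) / fact i) \<longlongrightarrow> (\<Sum>i\<le>m. 0 / fact i)) at_top"
    by (intro tendsto_sum tendsto_divide tendsto_power_div_exp_0 tendsto_const) auto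
  moreover have "(\<lambda>x::real. \<Sum>i\<le>m. (x^i / exp x) / fact i) = (\<lambda>x. \<Sum>i\<le>m. exp (- x) * x^i / fact i)"
    by (auto simp: fun_eq_iff exp_minus field_simps)
  ultimately show ?thesis by simp
qed

lemma case2:
  fixes r :: "real \<Rightarrow> ennreal"
  assumes rm[measurable]: "r \<in> borel_measurable borel"
    and rnu: "\<And>A. A \<in> sets borel \<Longrightarrow> set_nn_integral lborel A r = nu A"
    and Bm[measurable]: "B \<in> sets borel" and B: "B \<subseteq> {0<..<1}"
    and inf: "set_nn_integral lborel B r = \<infinity>"
    and null: "emeasure lborel (B \<inter> {x. r x = \<infinity>}) = 0"
  shows "AE \<omega> in M. infinite (B \<inter> S \<omega>)"
proof -
  define Bn where "Bn n = B \<inter> {x. r x \<le> of_nat n}" for n :: nat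
  have Bnm[measurable]: "Bn n \<in> sets borel" for n unfolding Bn_def by measurable
  have BnB: "Bn n \<subseteq> B" for n unfolding Bn_def by auto
  have Bn01: "Bn n \<subseteq> {0<..<1}" for n using BnB B by blast
  have fin_n: "set_nn_integral lborel (Bn n) r \<le> of_nat n" for n
  proof -
    have "set_nn_integral lborel (Bn n) r \<le> (\<integral>\<^sup>+x. of_nat n * indicator (Bn n) x \<partial>lborel)"
      by (intro nn_integral_mono) (auto simp: Bn_def indicator_def)
    also have "\<dots> = of_nat n * emeasure lborel (Bn n)"
      by (rule nn_integral_cmult_indicator) simp
    also have "\<dots> \<le> of_nat n * emeasure lborel {0<..<1::real}"
      by (intro mult_left_mono emeasure_mono Bn01) auto
    also have "\<dots> = of_nat n" by simp
    finally show ?thesis .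
  qed
  have pn: "0 < pB (Bn n)" for n
  proof (rule ccontr)
    assume "\<not> 0 < pB (Bn n)"
    then have "(\<integral>\<^sup>+\<omega>. ecnt (Bn n) \<omega> \<partial>M) = \<infinity>" by (rule inf_imp_p0[OF Bnm Bn01])
    then have "set_nn_integral lborel (Bn n) r = \<infinity>" using rnu[OF Bnm] nu_sub[OF Bn01] by simp
    with fin_n[of n] show False by (simp add: top_unique)
  qed
  define \<mu> where "\<mu> n = - ln (pB (Bn n))" for n
  have mun: "set_nn_integral lborel (Bn n) r = ennreal (\<mu> n)" for n
    using rnu[OF Bnm] nu_sub[OF Bn01] mean_Nc[OF Bnm Bn01 pn] by (simp add: \<mu>_def)
  have SUPinf: "(SUP n. set_nn_integral lborel (Bn n) r) = \<infinity>"
  proof -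
    have inc: "incseq (\<lambda>n x. r x * indicator (Bn n) x)"
    proof (intro incseq_SucI le_funI)
      fix n x
      have "Bn n \<subseteq> Bn (Suc n)"
      proof
        fix y assume "y \<in> Bn n"
        then have "y \<in> B" "r y \<le> of_nat n" by (auto simp: Bn_def)
        moreover have "(of_nat n :: ennreal) \<le> of_nat (Suc n)" by (rule of_nat_mono) simp
        ultimately show "y \<in> Bn (Suc n)" unfolding Bn_def by (auto intro: order_trans)
      qed
      then show "r x * indicator (Bn n) x \<le> r x * indicator (Bn (Suc n)) x"
        by (auto simp: indicator_def)
    qed
    have "(SUP n. set_nn_integral lborel (Bn n) r) = (\<integral>\<^sup>+x. (SUP n. r x * indicator (Bn n) x) \<partial>lborel)"
      by (rule nn_integral_monotone_convergence_SUP[symmetric, OF inc]) simp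
    also have "\<dots> = (\<integral>\<^sup>+x. r x * indicator (B \<inter> {x. r x \<noteq> \<infinity>}) x \<partial>lborel)"
    proof (intro nn_integral_cong)
      fix x
      show "(SUP n. r x * indicator (Bn n) x) = r x * indicator (B \<inter> {x. r x \<noteq> \<infinity>}) x"
      proof (cases "x \<in> B \<and> r x \<noteq> \<infinity>")
        case True
        then obtain t where t: "r x = ennreal t" "0 \<le> t" by (cases "r x" rule: ennreal_cases) auto
        obtain N :: nat where N: "t \<le> real N" using real_arch_simple by blast
        have "r x \<le> of_nat N" using t N by (simp add: ennreal_of_nat_eq_real_of_nat ennreal_leI)
        have le: "(SUP n. r x * indicator (Bn n) x) \<le> r x"
          by (intro SUP_least) (auto simp: indicator_def)
        have "r x * indicator (Bn N) x \<le> (SUP n. r x * indicator (Bn n) x)" by (rule SUP_upper) simp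
        then have "r x \<le> (SUP n. r x * indicator (Bn n) x)"
          using True \<open>r x \<le> of_nat N\<close> by (simp add: Bn_def indicator_def)
        with le True show ?thesis by (simp add: indicator_def)
      next
        case False
        then have z: "r x * indicator (Bn n) x = 0" for n
          by (auto simp: Bn_def indicator_def top_unique)
        have "(SUP n. r x * indicator (Bn n) x) = 0" unfolding z by simp
        moreover have "r x * indicator (B \<inter> {x. r x \<noteq> \<infinity>}) x = 0" using False by (simp add: indicator_def)
        ultimately show ?thesis by simp
      qed
    qed
    also have "\<dots> = set_nn_integral lborel B r"
    proof (rule nn_integral_cong_AE)
      have "B \<inter> {x. r x = \<infinity>} \<in> null_sets lborel" using null by (auto simp: null_sets_def)
      from AE_not_in[OF this]
      show "AE x in lborel. r x * indicator (B \<inter> {x. r x \<noteq> \<infinity>}) x = r x * indicator B x"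
        by eventually_elim (auto simp: indicator_def)
    qed
    finally show ?thesis using inf by simp
  qed
  have unb: "\<exists>n. T \<le> \<mu> n" for T
  proof (rule ccontr)
    assume "\<not> (\<exists>n. T \<le> \<mu> n)"
    then have "\<forall>n. \<mu> n \<le> T" by (auto simp: not_le less_imp_le)
    then have "(SUP n. set_nn_integral lborel (Bn n) r) \<le> ennreal T"
      by (intro SUP_least) (simp add: mun ennreal_leI)
    then have "\<infinity> \<le> ennreal T" unfolding SUPinf .
    then show False by (simp add: top_unique)
  qed
  define G where "G m = {\<omega> \<in> space M. ecnt B \<omega> \<le> of_nat m}" for m :: nat
  have Gm[measurable]: "G m \<in> sets M" for m unfolding G_def by measurable
  have G0: "prob (G m) = 0" for m
  proof -
    define f where "f x = (\<Sum>i\<le>m. exp (- x) * x^i / fact i)" for x :: real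
    have bound: "prob (G m) \<le> f (\<mu> n)" for n
    proof -
      have "G m \<subseteq> (\<Union>i\<in>{..m}. {\<omega> \<in> space M. Nc (Bn n) \<omega> = i})"
      proof
        fix \<omega> assume w: "\<omega> \<in> G m"
        then have "ecnt B \<omega> \<noteq> \<infinity>" by (auto simp: G_def top_unique)
        then have fB: "finite (B \<inter> S \<omega>)" using ecnt_infinite[of B \<omega>] by auto
        then have "ecnt B \<omega> = of_nat (card (B \<inter> S \<omega>))"
          unfolding ecnt_def by (simp add: emeasure_count_space_finite)
        then have "card (B \<inter> S \<omega>) \<le> m" using w by (simp add: G_def)
        moreover have "card (Bn n \<inter> S \<omega>) \<le> card (B \<inter> S \<omega>)"
          using fB BnB by (intro card_mono) auto
        ultimately show "\<omega> \<in> (\<Union>i\<in>{..m}. {\<omega> \<in> space M. Nc (Bn n) \<omega> = i})"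
          using w by (auto simp: G_def Nc_card)
      qed
      then have "prob (G m) \<le> prob (\<Union>i\<in>{..m}. {\<omega> \<in> space M. Nc (Bn n) \<omega> = i})"
        by (intro finite_measure_mono) auto
      also have "\<dots> = (\<Sum>i\<le>m. prob {\<omega> \<in> space M. Nc (Bn n) \<omega> = i})"
        by (rule finite_measure_finite_Union) (auto simp: disjoint_family_on_def)
      also have "\<dots> = f (\<mu> n)"
        unfolding f_def using dist_Nc[OF Bnm Bn01 pn] by (simp add: \<mu>_def)
      finally show ?thesis .
    qed
    have "prob (G m) \<le> e" if e: "0 < e" for e
    proof -
      have "eventually (\<lambda>x. f x < e) at_top"
        using order_tendstoD(2)[OF poisson_cdf_lim[of m] e] by (simp add: f_def)
      then obtain T where T: "\<And>x. T \<le> x \<Longrightarrow> f x < e" by (auto simp: eventually_at_top_linorder)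
      obtain n where "T \<le> \<mu> n" using unb by blast
      with bound[of n] T show ?thesis by force
    qed
    then have "prob (G m) \<le> 0" by (rule field_le_epsilon) simp
    then show ?thesis by (simp add: measure_le_0_iff)
  qed
  have "AE \<omega> in M. \<forall>m. \<omega> \<notin> G m"
    by (subst AE_all_countable) (auto simp: prob_eq_0[symmetric] G0)
  then show ?thesis using AE_space
  proof eventually_elim
    case (elim \<omega>)
    show ?case
    proof
      assume f: "finite (B \<inter> S \<omega>)"
      then have "ecnt B \<omega> = of_nat (card (B \<inter> S \<omega>))"
        unfolding ecnt_def by (simp add: emeasure_count_space_finite)
      then have "\<omega> \<in> G (card (B \<inter> S \<omega>))" using elim by (simp add: G_def)
      with elim show False by blast
    qed
  qed
qed

theorem main:
  "\<exists>r :: real \<Rightarrow> ennreal. r \<in> borel_measurable borel \<and>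
    (\<forall>B \<in> sets borel. B \<subseteq> {0<..<1} \<longrightarrow>
       ((set_nn_integral lborel B r = \<infinity> \<longrightarrow>
           (AE \<omega> in M. infinite (B \<inter> range (\<lambda>k. X k \<omega>)))) \<and>
        (set_nn_integral lborel B r < \<infinity> \<longrightarrow>
           (AE \<omega> in M. finite (B \<inter> range (\<lambda>k. X k \<omega>))) \<and>
           (\<forall>m::nat. measure M {\<omega> \<in> space M. card (B \<inter> range (\<lambda>k. X k \<omega>)) = m} =
              exp (- enn2real (set_nn_integral lborel B r)) *
              enn2real (set_nn_integral lborel B r) ^ m / fact m))))"
proof -
  obtain r where rm[measurable]: "r \<in> borel_measurable borel"
    and rnu: "\<And>A. A \<in> sets borel \<Longrightarrow> set_nn_integral lborel A r = nu A"
    using exists_r by blast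
  show ?thesis
  proof (rule exI[of _ r], rule conjI[OF rm], intro ballI impI)
    fix B :: "real set" assume Bm[measurable]: "B \<in> sets borel" and B: "B \<subseteq> {0<..<1}"
    have IB: "set_nn_integral lborel B r = (\<integral>\<^sup>+\<omega>. ecnt B \<omega> \<partial>M)"
      using rnu[OF Bm] nu_sub[OF B] by simp
    have partA: "set_nn_integral lborel B r = \<infinity> \<longrightarrow> (AE \<omega> in M. infinite (B \<inter> range (\<lambda>k. X k \<omega>)))"
    proof
      assume inf: "set_nn_integral lborel B r = \<infinity>"
      show "AE \<omega> in M. infinite (B \<inter> range (\<lambda>k. X k \<omega>))"
      proof (cases "emeasure lborel (B \<inter> {x. r x = \<infinity>}) = 0")
        case True
        from case2[OF rm rnu Bm B inf True] show ?thesis by (simp add: S_def)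
      next
        case False
        define A where "A = B \<inter> {x. r x = \<infinity>}"
        have Am[measurable]: "A \<in> sets borel" unfolding A_def by measurable
        have A01: "A \<subseteq> {0<..<1}" using B by (auto simp: A_def)
        have "AE \<omega> in M. infinite (A \<inter> S \<omega>)"
        proof (rule case1[OF Am A01])
          show "0 < emeasure lborel A" using False by (simp add: A_def zero_less_iff_neq_zero)
          fix A' assume A'm[measurable]: "A' \<in> sets borel" and A'A: "A' \<subseteq> A"
            and pos: "0 < emeasure lborel A'"
          have A'01: "A' \<subseteq> {0<..<1}" using A'A A01 by blast
          have "set_nn_integral lborel A' r = (\<integral>\<^sup>+x. \<infinity> * indicator A' x \<partial>lborel)"
            using A'A by (intro nn_integral_cong) (auto simp: A_def indicator_def)
          also have "\<dots> = \<infinity> * emeasure lborel A'" by (rule nn_integral_cmult_indicator) simp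
          also have "\<dots> = \<infinity>" using pos by (simp add: ennreal_top_mult)
          finally show "(\<integral>\<^sup>+\<omega>. ecnt A' \<omega> \<partial>M) = \<infinity>"
            using rnu[OF A'm] nu_sub[OF A'01] by simp
        qed
        then show ?thesis
        proof eventually_elim
          case (elim \<omega>)
          then show ?case unfolding S_def A_def
            using finite_subset[of "B \<inter> {x. r x = \<infinity>} \<inter> range (\<lambda>k. X k \<omega>)" "B \<inter> range (\<lambda>k. X k \<omega>)"] by auto
        qed
      qed
    qed
    have partB: "set_nn_integral lborel B r < \<infinity> \<longrightarrow> (AE \<omega> in M. finite (B \<inter> range (\<lambda>k. X k \<omega>))) \<and>
           (\<forall>m::nat. measure M {\<omega> \<in> space M. card (B \<inter> range (\<lambda>k. X k \<omega>)) = m} =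
              exp (- enn2real (set_nn_integral lborel B r)) *
              enn2real (set_nn_integral lborel B r) ^ m / fact m)"
    proof
      assume fin: "set_nn_integral lborel B r < \<infinity>"
      have p: "0 < pB B"
      proof (rule ccontr)
        assume "\<not> 0 < pB B"
        from inf_imp_p0[OF Bm B this] fin IB show False by simp
      qed
      have mu: "set_nn_integral lborel B r = ennreal (- ln (pB B))"
        using IB mean_Nc[OF Bm B p] by simp
      have mu0: "0 \<le> - ln (pB B)"
      proof -
        have "pB B \<le> 1" unfolding pB_def by simp
        then show ?thesis using p by simp
      qed
      show "(AE \<omega> in M. finite (B \<inter> range (\<lambda>k. X k \<omega>))) \<and>
           (\<forall>m::nat. measure M {\<omega> \<in> space M. card (B \<inter> range (\<lambda>k. X k \<omega>)) = m} =
              exp (- enn2real (set_nn_integral lborel B r)) *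
              enn2real (set_nn_integral lborel B r) ^ m / fact m)"
      proof (intro conjI allI)
        show "AE \<omega> in M. finite (B \<inter> range (\<lambda>k. X k \<omega>))"
          using pos_imp_fin(2)[OF Bm B p] by (simp add: S_def)
        fix m :: nat
        have "{\<omega> \<in> space M. card (B \<inter> range (\<lambda>k. X k \<omega>)) = m} = {\<omega> \<in> space M. Nc B \<omega> = m}"
          by (simp add: Nc_card S_def)
        then show "measure M {\<omega> \<in> space M. card (B \<inter> range (\<lambda>k. X k \<omega>)) = m} =
              exp (- enn2real (set_nn_integral lborel B r)) *
              enn2real (set_nn_integral lborel B r) ^ m / fact m"
          using dist_Nc[OF Bm B p, of m] mu mu0 by simp
      qed
    qed
    from partA partB show "(set_nn_integral lborel B r = \<infinity> \<longrightarrow> (AE \<omega> in M. infinite (B \<inter> range (\<lambda>k. X k \<omega>)))) \<and>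
        (set_nn_integral lborel B r < \<infinity> \<longrightarrow> (AE \<omega> in M. finite (B \<inter> range (\<lambda>k. X k \<omega>))) \<and>
           (\<forall>m::nat. measure M {\<omega> \<in> space M. card (B \<inter> range (\<lambda>k. X k \<omega>)) = m} =
              exp (- enn2real (set_nn_integral lborel B r)) *
              enn2real (set_nn_integral lborel B r) ^ m / fact m))" by blast
  qed
qed

end

theorem proposition4p4:
  fixes M :: "'a measure" and X :: "nat \<Rightarrow> 'a \<Rightarrow> real"
  assumes "prob_space M"
    and "\<And>k. X k \<in> borel_measurable M"
    and "\<And>k \<omega>. \<omega> \<in> space M \<Longrightarrow> X k \<omega> \<in> {0<..<1}"
    and "AE \<omega> in M. {0<..<1} \<subseteq> closure (range (\<lambda>k. X k \<omega>))"
    and "independence_condition M X"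
    and "\<And>B. B \<in> sets borel \<Longrightarrow> B \<subseteq> {0<..<1} \<Longrightarrow> emeasure lborel B = 0 \<Longrightarrow>
           AE \<omega> in M. B \<inter> range (\<lambda>k. X k \<omega>) = {}"
  shows "\<exists>r :: real \<Rightarrow> ennreal. r \<in> borel_measurable borel \<and>
    (\<forall>B \<in> sets borel. B \<subseteq> {0<..<1} \<longrightarrow>
       ((set_nn_integral lborel B r = \<infinity> \<longrightarrow>
           (AE \<omega> in M. infinite (B \<inter> range (\<lambda>k. X k \<omega>)))) \<and>
        (set_nn_integral lborel B r < \<infinity> \<longrightarrow>
           (AE \<omega> in M. finite (B \<inter> range (\<lambda>k. X k \<omega>))) \<and>
           (\<forall>m::nat. measure M {\<omega> \<in> space M. card (B \<inter> range (\<lambda>k. X k \<omega>)) = m} =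
              exp (- enn2real (set_nn_integral lborel B r)) *
              enn2real (set_nn_integral lborel B r) ^ m / fact m))))"
proof -
  interpret rcs M X
    by (rule rcs.intro) (use assms in auto)
  show ?thesis by (rule main)
qed


end
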